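(* In the setting described in the context, $\mathbb{E}_{v\sim h}[f(\psi^c(v))]\ge(1-\min\{2\beta,1/2\})\gamma\,F(\overline{y})$.
   Context: Let $I=\{1,\dots,n\}$ be a set of items, $B$ a positive integer, $[B]=\{1,\dots,B\}$, $[0;B]=\{0,1,\dots,B\}$; for $u,w\in[0;B]^I$, $u\le w$ means coordinatewise. Let $f:[0;B]^I\to\mathbb{R}_{\ge0}$ be monotone ($u\le w\Rightarrow f(u)\le f(w)$) and lattice submodular ($f(u\vee s\mathbf{1}_i)-f(u)\ge f(w\vee s\mathbf{1}_i)-f(w)$ for all $u\le w$, $s\in[0;B]$, $i\in I$, with $\vee$ the coordinatewise max and $\mathbf{1}_i$ the $i$-th unit vector). Each item $i$ has a random state $\Phi(i)\in[B]$, independent across items, with known distribution $p_i(s)=\Pr[\Phi(i)=s]$. Item $i$ in state $s$ has a nonnegative integer cost $c_i(s)$, with $c_i(s)\ge c_i(s')$ whenever $s\ge s'$. $C$ is a positive integer budget and $\mathcal{I}^{out}\subseteq 2^I$ is a downward-closed family. For $S\subseteq I$ and $\phi\in[B]^I$, $\phi_S$ equals $\phi(i)$ on $S$ and $0$ elsewhere; $\overline{f}(S)=\mathbb{E}[f(\Phi_S)]$, $F(\overline{x})=\sum_{U\subseteq I}\prod_{i\in U}\overline{x}(i)\prod_{i\notin U}(1-\overline{x}(i))\overline{f}(U)$, $P_{\mathcal{I}^{out}}=\mathrm{conv}\{\mathbf{1}_S: S\in\mathcal{I}^{out}\}$. A monotone $(\beta,\gamma)$-balanced CRS for $\mathcal{I}^{out}$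 is a (possibly randomized) scheme that, for any $\overline{z}\in\beta\cdot P_{\mathcal{I}^{out}}$ and the random set $R$ containing each $i$ independently with probability $\overline{z}(i)$, maps $R$ to $\chi(R)\subseteq R$ with $\chi(R)\in\mathcal{I}^{out}$, such that $\Pr[i\in\chi(R)\mid i\in R]\ge\gamma$ for all $i$, and for $i\in R\subseteq R'$, $\Pr[i\in\chi(R)]\ge\Pr[i\in\chi(R')]$. Assume such a scheme $\chi^{io}$ exists for given $\beta,\gamma\in[0,1]$. Problem P1: variables $x(i,t)\ge0$ for $i\in I$, $t\in\{1,\dots,C-c_i(B)\}$, $\overline{x}(i)=\sum_t x(i,t)$; maximize $F(\overline{x})$ subject to $\overline{x}(i)\le1$, $\overline{x}\in P_{\mathcal{I}^{out}}$, and for all $t\in\{1,\dots,C\}$: $\sum_{i\in I}\mathbb{E}[\min\{c_i(\Phi(i)),t\}]\sum_{t'=1}^{t}x(i,t')\le 2t$. Let $y$ be the solution of P1 computed by the stochastic continuous greedy algorithm of Asadpour and Nazerzadeh (2016) with stopping time $l=\min\{\beta,1/4\}$ and step size $\delta=o(n^{-3})$, $\overline{y}(i)=\sum_t y(i,t)$. Distribution $h$: $v\in[0;B]^I$ has independent coordinates with $\Pr[v(i)=j]=p_i(j)\overline{y}(i)$ for $j\in[B]$ and $\Pr[v(i)=0]=1-\overline{y}(i)$; $R(v)=\{i:v(i)\ne0\}$. Mapping $\psi^a$: $\psi^a(v)(i)=v(i)$ if $i\in\chi^{io}(R(v))$ (applying $\chi^{io}$ with $\overline{z}=\overline{y}$),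 else $0$. Mapping $\psi^b$: for each $i\in R(v)$ independently sample $t(i)\in\{1,\dots,C-c_i(B)\}$ with $\Pr[t(i)=t]=y(i,t)/\overline{y}(i)$; $\psi^b(v)(i)=v(i)$ if $i\in R(v)$ and $\sum_{i'\in R(v)\setminus\{i\},\,t(i')\le t(i)}c_{i'}(v(i'))\le t(i)$, else $0$. Mapping $\psi^c$: apply $\psi^a$ and $\psi^b$ to $v$ independently and set $\psi^c(v)(i)=v(i)$ if $\psi^a(v)(i)=v(i)$ and $\psi^b(v)(i)=v(i)$, and $0$ otherwise. The expectation is over $v\sim h$ and the internal randomness of $\psi^c$. *)

theory Defs
  imports "HOL-Analysis.Analysis" "HOL-Probability.Probability"
begin

definition vecs :: "'i set \<Rightarrow> nat \<Rightarrow> ('i \<Rightarrow> nat) set" where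
  "vecs I B = {u. (\<forall>i\<in>I. u i \<le> B) \<and> (\<forall>i. i \<notin> I \<longrightarrow> u i = 0)}"

definition monotone_vec :: "'i set \<Rightarrow> nat \<Rightarrow> (('i \<Rightarrow> nat) \<Rightarrow> real) \<Rightarrow> bool" where
  "monotone_vec I B f \<longleftrightarrow>
     (\<forall>u\<in>vecs I B. \<forall>w\<in>vecs I B. u \<le> w \<longrightarrow> f u \<le> f w)"

text \<open>Lattice submodularity; u \<or> s 1_i is u(i := max (u i) s).\<close>
definition lattice_submodular :: "'i set \<Rightarrow> nat \<Rightarrow> (('i \<Rightarrow> nat) \<Rightarrow> real) \<Rightarrow> bool" where
  "lattice_submodular I B f \<longleftrightarrow>
     (\<forall>u\<in>vecs I B. \<forall>w\<in>vecs I B. \<forall>s\<in>{0..B}. \<forall>i\<in>I. u \<le> w \<longrightarrow>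
        f (u(i := max (u i) s)) - f u \<ge> f (w(i := max (w i) s)) - f w)"

definition restr_state :: "('i \<Rightarrow> nat) \<Rightarrow> 'i set \<Rightarrow> ('i \<Rightarrow> nat)" where
  "restr_state \<phi> S = (\<lambda>i. if i \<in> S then \<phi> i else 0)"

text \<open>fbar(S) = E[f(Phi_S)], Phi(i) in [B] independent with Pr[Phi(i)=s] = p i s.\<close>
definition fbar :: "'i set \<Rightarrow> nat \<Rightarrow> ('i \<Rightarrow> nat \<Rightarrow> real) \<Rightarrow> (('i \<Rightarrow> nat) \<Rightarrow> real)
    \<Rightarrow> 'i set \<Rightarrow> real" where
  "fbar I B p f S =
     (\<Sum>\<phi>\<in>PiE I (\<lambda>_. {1..B}). (\<Prod>i\<in>I. p i (\<phi> i)) * f (restr_state \<phi> S))"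

definition multilinear_ext :: "'i set \<Rightarrow> ('i set \<Rightarrow> real) \<Rightarrow> ('i \<Rightarrow> real) \<Rightarrow> real" where
  "multilinear_ext I g x =
     (\<Sum>U\<in>Pow I. (\<Prod>i\<in>U. x i) * (\<Prod>i\<in>I - U. 1 - x i) * g U)"

definition indicator_polytope :: "'i set set \<Rightarrow> ('i \<Rightarrow> real) set" where
  "indicator_polytope A = {x. \<exists>w. (\<forall>S\<in>A. w S \<ge> 0) \<and> sum w A = 1 \<and>
        x = (\<lambda>i. \<Sum>S\<in>A. w S * indicator S i)}"

definition scaled_set :: "real \<Rightarrow> ('i \<Rightarrow> real) set \<Rightarrow> ('i \<Rightarrow> real) set" where
  "scaled_set \<beta> P = (\<lambda>x. (\<lambda>i. \<beta> * x i)) ` P"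

definition downward_closed :: "'i set \<Rightarrow> 'i set set \<Rightarrow> bool" where
  "downward_closed I A \<longleftrightarrow> A \<subseteq> Pow I \<and> (\<forall>S\<in>A. \<forall>T. T \<subseteq> S \<longrightarrow> T \<in> A)"

definition set_prob :: "'i set \<Rightarrow> ('i \<Rightarrow> real) \<Rightarrow> 'i set \<Rightarrow> real" where
  "set_prob I z R = (\<Prod>i\<in>R. z i) * (\<Prod>i\<in>I - R. 1 - z i)"

text \<open>Monotone (beta,gamma)-balanced CRS: chi z R is the (random) output of the scheme
  applied with vector z to R.  The balancedness condition
  Pr[i in chi(R) | i in R] >= gamma is written as Pr[i in chi(R) and i in R] >= gamma * z i.\<close>
definition monotone_balanced_CRS ::
    "'i set \<Rightarrow> 'i set set \<Rightarrow> real \<Rightarrow> real \<Rightarrow> (('i \<Rightarrow> real) \<Rightarrow> 'i set \<Rightarrow> 'i set pmf) \<Rightarrow> bool" where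
  "monotone_balanced_CRS I A \<beta> \<gamma> chi \<longleftrightarrow>
     (\<forall>z\<in>scaled_set \<beta> (indicator_polytope A).
        (\<forall>R\<in>Pow I. set_pmf (chi z R) \<subseteq> {T. T \<subseteq> R \<and> T \<in> A}) \<and>
        (\<forall>i\<in>I. (\<Sum>R\<in>{R\<in>Pow I. i \<in> R}. set_prob I z R * measure_pmf.prob (chi z R) {T. i \<in> T})
                 \<ge> \<gamma> * z i) \<and>
        (\<forall>i R R'. i \<in> R \<longrightarrow> R \<subseteq> R' \<longrightarrow> R' \<subseteq> I \<longrightarrow>
                 measure_pmf.prob (chi z R) {T. i \<in> T} \<ge> measure_pmf.prob (chi z R') {T. i \<in> T}))"

definition exp_min_cost :: "nat \<Rightarrow> ('i \<Rightarrow> nat \<Rightarrow> real) \<Rightarrow> ('i \<Rightarrow> nat \<Rightarrow> nat) \<Rightarrow> 'i \<Rightarrow> nat \<Rightarrow> real" where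
  "exp_min_cost B p c i t = (\<Sum>s\<in>{1..B}. p i s * real (min (c i s) t))"

definition xbar :: "nat \<Rightarrow> nat \<Rightarrow> ('i \<Rightarrow> nat \<Rightarrow> nat) \<Rightarrow> ('i \<Rightarrow> nat \<Rightarrow> real) \<Rightarrow> 'i \<Rightarrow> real" where
  "xbar B C c x i = (\<Sum>t\<in>{1..C - c i B}. x i t)"

definition P1_feasible :: "'i set \<Rightarrow> nat \<Rightarrow> ('i \<Rightarrow> nat \<Rightarrow> real) \<Rightarrow> ('i \<Rightarrow> nat \<Rightarrow> nat) \<Rightarrow> nat
    \<Rightarrow> 'i set set \<Rightarrow> ('i \<Rightarrow> nat \<Rightarrow> real) \<Rightarrow> bool" where
  "P1_feasible I B p c C A x \<longleftrightarrow>
     (\<forall>i t. (i \<in> I \<and> t \<in> {1..C - c i B}) \<longrightarrow> x i t \<ge> 0) \<and>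
     (\<forall>i t. \<not> (i \<in> I \<and> t \<in> {1..C - c i B}) \<longrightarrow> x i t = 0) \<and>
     (\<forall>i\<in>I. xbar B C c x i \<le> 1) \<and>
     xbar B C c x \<in> indicator_polytope A \<and>
     (\<forall>t\<in>{1..C}. (\<Sum>i\<in>I. exp_min_cost B p c i t * (\<Sum>t'\<in>{1..t}. x i t')) \<le> 2 * real t)"

definition h_prob :: "'i set \<Rightarrow> ('i \<Rightarrow> nat \<Rightarrow> real) \<Rightarrow> ('i \<Rightarrow> real) \<Rightarrow> ('i \<Rightarrow> nat) \<Rightarrow> real" where
  "h_prob I p yb v = (\<Prod>i\<in>I. if v i = 0 then 1 - yb i else p i (v i) * yb i)"

definition Rset :: "'i set \<Rightarrow> ('i \<Rightarrow> nat) \<Rightarrow> 'i set" where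
  "Rset I v = {i\<in>I. v i \<noteq> 0}"

definition keep_b :: "'i set \<Rightarrow> ('i \<Rightarrow> nat \<Rightarrow> nat) \<Rightarrow> ('i \<Rightarrow> nat) \<Rightarrow> ('i \<Rightarrow> nat) \<Rightarrow> 'i \<Rightarrow> bool" where
  "keep_b I c v tt i \<longleftrightarrow> i \<in> Rset I v \<and>
     (\<Sum>i'\<in>{i'\<in>Rset I v - {i}. tt i' \<le> tt i}. c i' (v i')) \<le> tt i"

definition psi_c :: "'i set \<Rightarrow> ('i \<Rightarrow> nat \<Rightarrow> nat) \<Rightarrow> ('i \<Rightarrow> nat) \<Rightarrow> 'i set \<Rightarrow> ('i \<Rightarrow> nat)
    \<Rightarrow> ('i \<Rightarrow> nat)" where
  "psi_c I c v T tt = (\<lambda>i. if i \<in> T \<and> keep_b I c v tt i then v i else 0)"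

text \<open>E_{v ~ h}[f(psi^c(v))], expectation also over the randomness of chi^io and the t(i).\<close>
definition expected_psi_c ::
    "'i set \<Rightarrow> nat \<Rightarrow> ('i \<Rightarrow> nat \<Rightarrow> real) \<Rightarrow> ('i \<Rightarrow> nat \<Rightarrow> nat) \<Rightarrow> nat
     \<Rightarrow> (('i \<Rightarrow> real) \<Rightarrow> 'i set \<Rightarrow> 'i set pmf) \<Rightarrow> (('i \<Rightarrow> nat) \<Rightarrow> real)
     \<Rightarrow> ('i \<Rightarrow> nat \<Rightarrow> real) \<Rightarrow> real" where
  "expected_psi_c I B p c C chi f y =
     (let yb = xbar B C c y in
      \<Sum>v\<in>vecs I B. h_prob I p yb v *
        (\<Sum>tt\<in>PiE (Rset I v) (\<lambda>i. {1..C - c i B}).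
           (\<Prod>i\<in>Rset I v. y i (tt i) / yb i) *
           (\<Sum>T\<in>Pow (Rset I v). pmf (chi yb (Rset I v)) T * f (psi_c I c v T tt))))"

end

theory Submission
  imports Defs
begin

definition PD :: "'j set \<Rightarrow> ('j \<Rightarrow> 'a set) \<Rightarrow> 'a \<Rightarrow> ('j \<Rightarrow> 'a) set" where
  "PD J D d = {x. (\<forall>j\<in>J. x j \<in> D j) \<and> (\<forall>j. j \<notin> J \<longrightarrow> x j = d)}"

definition EP :: "'j set \<Rightarrow> ('j \<Rightarrow> 'a set) \<Rightarrow> 'a \<Rightarrow> ('j \<Rightarrow> 'a \<Rightarrow> real) \<Rightarrow> (('j \<Rightarrow> 'a) \<Rightarrow> real) \<Rightarrow> real" where
  "EP J D d q g = (\<Sum>x\<in>PD J D d. (\<Prod>j\<in>J. q j (x j)) * g x)"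

lemma PD_empty: "PD {} D d = {\<lambda>_. d}"
  unfolding PD_def by auto

lemma PD_insert:
  assumes "a \<notin> J"
  shows "PD (insert a J) D d = (\<lambda>(s,x). x(a:=s)) ` (D a \<times> PD J D d)"
proof
  show "PD (insert a J) D d \<subseteq> (\<lambda>(s,x). x(a:=s)) ` (D a \<times> PD J D d)"
  proof
    fix x assume x: "x \<in> PD (insert a J) D d"
    then have "(x a, x(a:=d)) \<in> D a \<times> PD J D d" using assms unfolding PD_def by auto
    moreover have "x = (\<lambda>(s,x). x(a:=s)) (x a, x(a:=d))" by auto
    ultimately show "x \<in> (\<lambda>(s,x). x(a:=s)) ` (D a \<times> PD J D d)" by blast
  qed
  show "(\<lambda>(s,x). x(a:=s)) ` (D a \<times> PD J D d) \<subseteq> PD (insert a J) D d"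
    using assms unfolding PD_def by auto
qed

lemma PD_insert_inj:
  assumes "a \<notin> J"
  shows "inj_on (\<lambda>(s,x). x(a:=s)) (D a \<times> PD J D d)"
proof (rule inj_onI, clarify)
  fix s x t y assume "s \<in> D a" "x \<in> PD J D d" "t \<in> D a" "y \<in> PD J D d" and eq: "x(a := s) = y(a := t)"
  have "s = t" using fun_cong[OF eq, of a] by simp
  moreover have "x = y"
  proof
    fix j show "x j = y j"
    proof (cases "j = a")
      case True
      then show ?thesis using \<open>x \<in> PD J D d\<close> \<open>y \<in> PD J D d\<close> assms unfolding PD_def by auto
    next
      case False
      then show ?thesis using fun_cong[OF eq, of j] by simp
    qed
  qed
  ultimately show "s = t \<and> x = y" by simp
qed

lemma finite_PD:
  assumes "finite J" "\<forall>j\<in>J. finite (D j)"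
  shows "finite (PD J D d)"
  using assms
proof (induction J rule: finite_induct)
  case empty
  then show ?case by (simp add: PD_empty)
next
  case (insert a J)
  then show ?case by (simp add: PD_insert)
qed

lemma PD_PiE: "PD J D undefined = PiE J D"
  unfolding PD_def PiE_def Pi_def extensional_def by auto

lemma EP_empty: "EP {} D d q g = g (\<lambda>_. d)"
  unfolding EP_def PD_empty by simp

lemma EP_insert:
  assumes "finite J" "a \<notin> J" "\<forall>j\<in>insert a J. finite (D j)"
  shows "EP (insert a J) D d q g = (\<Sum>s\<in>D a. q a s * EP J D d q (\<lambda>x. g (x(a:=s))))"
proof -
  have fin: "finite (PD J D d)" using assms finite_PD by auto
  have "EP (insert a J) D d q g
      = (\<Sum>z\<in>D a \<times> PD J D d. (\<Prod>j\<in>insert a J. q j (((snd z)(a:=fst z)) j)) * g ((snd z)(a:=fst z)))"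
    unfolding EP_def PD_insert[OF assms(2)]
    by (subst sum.reindex[OF PD_insert_inj[OF assms(2)]]) (simp add: case_prod_beta)
  also have "\<dots> = (\<Sum>s\<in>D a. \<Sum>x\<in>PD J D d. (\<Prod>j\<in>insert a J. q j ((x(a:=s)) j)) * g (x(a:=s)))"
    by (simp add: sum.cartesian_product case_prod_beta)
  also have "\<dots> = (\<Sum>s\<in>D a. \<Sum>x\<in>PD J D d. q a s * ((\<Prod>j\<in>J. q j (x j)) * g (x(a:=s))))"
  proof (intro sum.cong refl)
    fix s x
    have "(\<Prod>j\<in>insert a J. q j ((x(a:=s)) j)) = q a s * (\<Prod>j\<in>J. q j ((x(a:=s)) j))"
      using assms by (simp add: prod.insert)
    also have "(\<Prod>j\<in>J. q j ((x(a:=s)) j)) = (\<Prod>j\<in>J. q j (x j))"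
      using assms by (intro prod.cong) auto
    finally show "(\<Prod>j\<in>insert a J. q j ((x(a:=s)) j)) * g (x(a:=s)) = q a s * ((\<Prod>j\<in>J. q j (x j)) * g (x(a:=s)))"
      by simp
  qed
  also have "\<dots> = (\<Sum>s\<in>D a. q a s * EP J D d q (\<lambda>x. g (x(a:=s))))"
    unfolding EP_def by (simp add: sum_distrib_left)
  finally show ?thesis .
qed

lemma EP_cong:
  assumes "\<And>x. x \<in> PD J D d \<Longrightarrow> g x = h x"
  shows "EP J D d q g = EP J D d q h"
  unfolding EP_def using assms by (intro sum.cong) auto

lemma EP_add: "EP J D d q (\<lambda>x. g x + h x) = EP J D d q g + EP J D d q h"
  unfolding EP_def by (simp add: distrib_left sum.distrib)

lemma EP_diff: "EP J D d q (\<lambda>x. g x - h x) = EP J D d q g - EP J D d q h"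
  unfolding EP_def by (simp add: right_diff_distrib sum_subtractf)

lemma EP_cmult: "EP J D d q (\<lambda>x. c * g x) = c * EP J D d q g"
  unfolding EP_def sum_distrib_left by (rule sum.cong) (simp_all add: mult.left_commute)

lemma EP_sum: "EP J D d q (\<lambda>x. \<Sum>k\<in>K. g k x) = (\<Sum>k\<in>K. EP J D d q (g k))"
  unfolding EP_def sum_distrib_left by (rule sum.swap)

lemma EP_weight_nonneg:
  fixes q :: "'j \<Rightarrow> 'a \<Rightarrow> real"
  assumes "\<forall>j\<in>J. \<forall>s\<in>D j. q j s \<ge> 0" "x \<in> PD J D d"
  shows "(\<Prod>j\<in>J. q j (x j)) \<ge> 0"
proof -
  have "\<forall>j\<in>J. 0 \<le> q j (x j)" using assms unfolding PD_def by auto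
  then show ?thesis by (intro prod_nonneg) auto
qed

lemma EP_mono:
  assumes "\<forall>j\<in>J. \<forall>s\<in>D j. q j s \<ge> 0" "\<And>x. x \<in> PD J D d \<Longrightarrow> g x \<le> h x"
  shows "EP J D d q g \<le> EP J D d q h"
  unfolding EP_def using assms EP_weight_nonneg[OF assms(1)]
  by (intro sum_mono mult_left_mono) auto

lemma EP_nonneg:
  assumes "\<forall>j\<in>J. \<forall>s\<in>D j. q j s \<ge> 0" "\<And>x. x \<in> PD J D d \<Longrightarrow> 0 \<le> g x"
  shows "0 \<le> EP J D d q g"
  using EP_mono[OF assms(1), where g="\<lambda>_. 0" and h=g] assms(2) unfolding EP_def by simp

lemma EP_const:
  assumes "finite J" "\<forall>j\<in>J. finite (D j)" "\<forall>j\<in>J. sum (q j) (D j) = 1"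
  shows "EP J D d q (\<lambda>_. c) = c"
  using assms
proof (induction J rule: finite_induct)
  case empty
  then show ?case by (simp add: EP_empty)
next
  case (insert a J)
  have fin: "\<forall>j\<in>insert a J. finite (D j)" using insert.prems(1) .
  have IH: "EP J D d q (\<lambda>_. c) = c" by (rule insert.IH) (use insert.prems in auto)
  have "EP (insert a J) D d q (\<lambda>_. c) = (\<Sum>s\<in>D a. q a s * EP J D d q (\<lambda>_. c))"
    by (rule EP_insert[OF insert.hyps fin])
  also have "\<dots> = (\<Sum>s\<in>D a. q a s) * c" unfolding IH by (simp add: sum_distrib_right)
  also have "\<dots> = c" using insert.prems(2) by simp
  finally show ?case .
qed

lemma EP_coord:
  assumes "finite J" "\<forall>j\<in>J. finite (D j)" "\<forall>j\<in>J. sum (q j) (D j) = 1" "a \<in> J"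
  shows "EP J D d q (\<lambda>x. g (x a)) = (\<Sum>s\<in>D a. q a s * g s)"
proof -
  have J: "J = insert a (J - {a})" using assms by auto
  have "EP J D d q (\<lambda>x. g (x a)) = (\<Sum>s\<in>D a. q a s * EP (J - {a}) D d q (\<lambda>x. g ((x(a:=s)) a)))"
    using assms by (subst J, subst EP_insert) auto
  also have "\<dots> = (\<Sum>s\<in>D a. q a s * g s)"
    using assms by (simp add: EP_const)
  finally show ?thesis .
qed

lemma EP_marginal:
  assumes "finite F" "F \<inter> J = {}" "finite J" "\<forall>j\<in>J \<union> F. finite (D j)" "\<forall>j\<in>F. sum (q j) (D j) = 1"
  shows "EP (J \<union> F) D d q (\<lambda>x. g (\<lambda>j. if j \<in> J then x j else d)) = EP J D d q g"
  using assms
proof (induction F rule: finite_induct)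
  case empty
  have "EP J D d q (\<lambda>x. g (\<lambda>j. if j \<in> J then x j else d)) = EP J D d q g"
  proof (rule EP_cong)
    fix x assume "x \<in> PD J D d"
    then have "(\<lambda>j. if j \<in> J then x j else d) = x" unfolding PD_def by auto
    then show "g (\<lambda>j. if j \<in> J then x j else d) = g x" by simp
  qed
  then show ?case by simp
next
  case (insert a F)
  have fin: "finite (J \<union> F)" "a \<notin> J \<union> F" "\<forall>j\<in>insert a (J \<union> F). finite (D j)"
    using insert.hyps insert.prems by auto
  have IH: "EP (J \<union> F) D d q (\<lambda>x. g (\<lambda>j. if j \<in> J then x j else d)) = EP J D d q g"
    by (rule insert.IH) (use insert.prems in auto)
  have eqf: "(\<lambda>j. if j \<in> J then (x(a:=s)) j else d) = (\<lambda>j. if j \<in> J then x j else d)" for x s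
    using insert.prems(1) by auto
  have "EP (J \<union> insert a F) D d q (\<lambda>x. g (\<lambda>j. if j \<in> J then x j else d))
      = EP (insert a (J \<union> F)) D d q (\<lambda>x. g (\<lambda>j. if j \<in> J then x j else d))" by simp
  also have "\<dots> = (\<Sum>s\<in>D a. q a s * EP (J \<union> F) D d q (\<lambda>x. g (\<lambda>j. if j \<in> J then (x(a:=s)) j else d)))"
    by (rule EP_insert[OF fin])
  also have "\<dots> = (\<Sum>s\<in>D a. q a s * EP J D d q g)"
    unfolding eqf IH ..
  also have "\<dots> = EP J D d q g"
    using insert.prems(4) by (simp add: sum_distrib_right[symmetric])
  finally show ?case .
qed

lemma chebyshev_sum:
  fixes G H :: "'a::linorder \<Rightarrow> real"
  assumes "finite S" "\<forall>s\<in>S. q s \<ge> 0" "sum q S = 1"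
    and "\<forall>s\<in>S. \<forall>t\<in>S. s \<le> t \<longrightarrow> G t \<le> G s"
    and "\<forall>s\<in>S. \<forall>t\<in>S. s \<le> t \<longrightarrow> H t \<le> H s"
  shows "(\<Sum>s\<in>S. q s * G s) * (\<Sum>s\<in>S. q s * H s) \<le> (\<Sum>s\<in>S. q s * (G s * H s))"
proof -
  have pos: "0 \<le> (G s - G t) * (H s - H t)" if "s \<in> S" "t \<in> S" for s t
  proof (cases "s \<le> t")
    case True
    have "G t \<le> G s" "H t \<le> H s" using assms(4,5) that True by auto
    then show ?thesis by (intro mult_nonneg_nonneg) auto
  next
    case False
    then have "t \<le> s" by simp
    have "G s \<le> G t" "H s \<le> H t" using assms(4,5) that \<open>t \<le> s\<close> by auto
    then show ?thesis by (intro mult_nonpos_nonpos) auto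
  qed
  have "0 \<le> (\<Sum>s\<in>S. \<Sum>t\<in>S. q s * q t * ((G s - G t) * (H s - H t)))"
  proof (intro sum_nonneg)
    fix s t assume "s \<in> S" "t \<in> S"
    then show "0 \<le> q s * q t * ((G s - G t) * (H s - H t))"
    proof -
      have "0 \<le> q s * q t" using assms(2) \<open>s \<in> S\<close> \<open>t \<in> S\<close> by simp
      then show ?thesis using pos[OF \<open>s \<in> S\<close> \<open>t \<in> S\<close>] by (rule mult_nonneg_nonneg)
    qed
  qed
  also have "\<dots> = (\<Sum>s\<in>S. \<Sum>t\<in>S. q s * (G s * H s) * q t + q t * (G t * H t) * q s
        - (q s * G s) * (q t * H t) - (q t * G t) * (q s * H s))"
    by (intro sum.cong refl) (simp add: algebra_simps)
  also have "\<dots> = (\<Sum>s\<in>S. \<Sum>t\<in>S. q s * (G s * H s) * q t) + (\<Sum>s\<in>S. \<Sum>t\<in>S. q t * (G t * H t) * q s)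
        - (\<Sum>s\<in>S. \<Sum>t\<in>S. (q s * G s) * (q t * H t)) - (\<Sum>s\<in>S. \<Sum>t\<in>S. (q t * G t) * (q s * H s))"
    by (simp add: sum.distrib sum_subtractf)
  also have "(\<Sum>s\<in>S. \<Sum>t\<in>S. q s * (G s * H s) * q t) = (\<Sum>s\<in>S. q s * (G s * H s))"
    using assms(3) by (simp add: sum_distrib_left[symmetric])
  also have "(\<Sum>s\<in>S. \<Sum>t\<in>S. q t * (G t * H t) * q s) = (\<Sum>s\<in>S. q s * (G s * H s))"
    using assms(3) by (simp add: sum_distrib_right[symmetric] sum_distrib_left[symmetric])
  also have "(\<Sum>s\<in>S. \<Sum>t\<in>S. (q s * G s) * (q t * H t)) = (\<Sum>s\<in>S. q s * G s) * (\<Sum>s\<in>S. q s * H s)"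
    by (simp add: sum_product)
  also have "(\<Sum>s\<in>S. \<Sum>t\<in>S. (q t * G t) * (q s * H s)) = (\<Sum>s\<in>S. q s * G s) * (\<Sum>s\<in>S. q s * H s)"
    unfolding sum_product by (rule sum.swap)
  finally show ?thesis by simp
qed

definition antitone_on_PD :: "'j set \<Rightarrow> ('j \<Rightarrow> nat set) \<Rightarrow> nat \<Rightarrow> (('j \<Rightarrow> nat) \<Rightarrow> real) \<Rightarrow> bool" where
  "antitone_on_PD J D d g \<longleftrightarrow> (\<forall>x\<in>PD J D d. \<forall>y\<in>PD J D d. (\<forall>j\<in>J. x j \<le> y j) \<longrightarrow> g y \<le> g x)"

lemma antitone_on_PD_D:
  "antitone_on_PD J D d g \<Longrightarrow> x \<in> PD J D d \<Longrightarrow> y \<in> PD J D d \<Longrightarrow> \<forall>j\<in>J. x j \<le> y j \<Longrightarrow> g y \<le> g x"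
  unfolding antitone_on_PD_def by blast

lemma harris:
  assumes "finite J" "\<forall>j\<in>J. finite (D j)" "\<forall>j\<in>J. sum (q j) (D j) = 1"
    "\<forall>j\<in>J. \<forall>s\<in>D j. q j s \<ge> 0"
    "antitone_on_PD J D d g" "antitone_on_PD J D d h"
  shows "EP J D d q g * EP J D d q h \<le> EP J D d q (\<lambda>x. g x * h x)"
  using assms
proof (induction J arbitrary: g h rule: finite_induct)
  case empty
  then show ?case by (simp add: EP_empty)
next
  case (insert a J)
  let ?G = "\<lambda>s. EP J D d q (\<lambda>x. g (x(a:=s)))"
  let ?H = "\<lambda>s. EP J D d q (\<lambda>x. h (x(a:=s)))"
  have mem: "x(a:=s) \<in> PD (insert a J) D d" if "x \<in> PD J D d" "s \<in> D a" for x s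
    using that insert(2) unfolding PD_def by auto
  have anti: "antitone_on_PD J D d (\<lambda>x. g (x(a:=s)))" "antitone_on_PD J D d (\<lambda>x. h (x(a:=s)))"
    if s: "s \<in> D a" for s
  proof -
    have le: "\<forall>j\<in>insert a J. (x(a:=s)) j \<le> (y(a:=s)) j" if "\<forall>j\<in>J. x j \<le> y j" for x y :: "'a \<Rightarrow> nat"
      using that by auto
    show "antitone_on_PD J D d (\<lambda>x. g (x(a:=s)))"
      unfolding antitone_on_PD_def
    proof (intro ballI impI)
      fix x y assume xy: "x \<in> PD J D d" "y \<in> PD J D d" "\<forall>j\<in>J. x j \<le> y j"
      show "g (y(a:=s)) \<le> g (x(a:=s))"
        by (rule antitone_on_PD_D[OF insert.prems(4) mem[OF xy(1) s] mem[OF xy(2) s] le[OF xy(3)]])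
    qed
    show "antitone_on_PD J D d (\<lambda>x. h (x(a:=s)))"
      unfolding antitone_on_PD_def
    proof (intro ballI impI)
      fix x y assume xy: "x \<in> PD J D d" "y \<in> PD J D d" "\<forall>j\<in>J. x j \<le> y j"
      show "h (y(a:=s)) \<le> h (x(a:=s))"
        by (rule antitone_on_PD_D[OF insert.prems(5) mem[OF xy(1) s] mem[OF xy(2) s] le[OF xy(3)]])
    qed
  qed
  have qJ: "\<forall>j\<in>J. \<forall>s\<in>D j. 0 \<le> q j s" using insert.prems(3) by simp
  have fa: "finite (D a)" using insert.prems(1) by simp
  have qa: "\<forall>s\<in>D a. 0 \<le> q a s" using insert.prems(3) by simp
  have sa: "sum (q a) (D a) = 1" using insert.prems(2) by simp
  have mG: "\<forall>s\<in>D a. \<forall>t\<in>D a. s \<le> t \<longrightarrow> ?G t \<le> ?G s"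
  proof (intro ballI impI)
    fix s t assume st: "s \<in> D a" "t \<in> D a" "s \<le> t"
    show "?G t \<le> ?G s"
    proof (rule EP_mono[OF qJ])
      fix x assume x: "x \<in> PD J D d"
      have "\<forall>j\<in>insert a J. (x(a:=s)) j \<le> (x(a:=t)) j" using st by auto
      then show "g (x(a:=t)) \<le> g (x(a:=s))"
        by (rule antitone_on_PD_D[OF insert.prems(4) mem[OF x st(1)] mem[OF x st(2)]])
    qed
  qed
  have mH: "\<forall>s\<in>D a. \<forall>t\<in>D a. s \<le> t \<longrightarrow> ?H t \<le> ?H s"
  proof (intro ballI impI)
    fix s t assume st: "s \<in> D a" "t \<in> D a" "s \<le> t"
    show "?H t \<le> ?H s"
    proof (rule EP_mono[OF qJ])
      fix x assume x: "x \<in> PD J D d"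
      have "\<forall>j\<in>insert a J. (x(a:=s)) j \<le> (x(a:=t)) j" using st by auto
      then show "h (x(a:=t)) \<le> h (x(a:=s))"
        by (rule antitone_on_PD_D[OF insert.prems(5) mem[OF x st(1)] mem[OF x st(2)]])
    qed
  qed
  have "(\<Sum>s\<in>D a. q a s * ?G s) * (\<Sum>s\<in>D a. q a s * ?H s) \<le> (\<Sum>s\<in>D a. q a s * (?G s * ?H s))"
    by (rule chebyshev_sum[OF fa qa sa mG mH])
  also have "\<dots> \<le> (\<Sum>s\<in>D a. q a s * EP J D d q (\<lambda>x. g (x(a:=s)) * h (x(a:=s))))"
  proof (rule sum_mono)
    fix s assume s: "s \<in> D a"
    have "?G s * ?H s \<le> EP J D d q (\<lambda>x. g (x(a:=s)) * h (x(a:=s)))"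
    proof (rule insert.IH[OF _ _ _ anti(1)[OF s] anti(2)[OF s]])
      show "\<forall>j\<in>J. finite (D j)" using insert.prems(1) by simp
      show "\<forall>j\<in>J. sum (q j) (D j) = 1" using insert.prems(2) by simp
    qed (rule qJ)
    then show "q a s * (?G s * ?H s) \<le> q a s * EP J D d q (\<lambda>x. g (x(a:=s)) * h (x(a:=s)))"
      using insert.prems(3) s by (intro mult_left_mono) auto
  qed
  finally have ineq: "(\<Sum>s\<in>D a. q a s * ?G s) * (\<Sum>s\<in>D a. q a s * ?H s)
     \<le> (\<Sum>s\<in>D a. q a s * EP J D d q (\<lambda>x. g (x(a:=s)) * h (x(a:=s))))" .
  have fin: "\<forall>j\<in>insert a J. finite (D j)" using insert.prems(1) .
  show ?case
    unfolding EP_insert[OF insert.hyps(1) insert.hyps(2) fin, where q=q and g=g]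
      EP_insert[OF insert.hyps(1) insert.hyps(2) fin, where q=q and g=h]
      EP_insert[OF insert.hyps(1) insert.hyps(2) fin, where q=q and g="\<lambda>x. g x * h x"]
    by (rule ineq)
qed

definition hq :: "('i \<Rightarrow> nat \<Rightarrow> real) \<Rightarrow> ('i \<Rightarrow> real) \<Rightarrow> 'i \<Rightarrow> nat \<Rightarrow> real" where
  "hq p yb j s = (if s = 0 then 1 - yb j else p j s * yb j)"

lemma sum_Pow_insert:
  assumes "finite J" "a \<notin> J"
  shows "(\<Sum>U\<in>Pow (insert a J). F U) = (\<Sum>U\<in>Pow J. F U) + (\<Sum>U\<in>Pow J. F (insert a U))"
proof -
  have disj: "Pow J \<inter> insert a ` Pow J = {}" using assms by auto
  have inj: "inj_on (insert a) (Pow J)"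
  proof (rule inj_onI)
    fix U V assume "U \<in> Pow J" "V \<in> Pow J" "insert a U = insert a V"
    moreover have "a \<notin> U" "a \<notin> V" using assms \<open>U \<in> Pow J\<close> \<open>V \<in> Pow J\<close> by auto
    ultimately show "U = V" by (metis insert_ident)
  qed
  have "(\<Sum>U\<in>Pow (insert a J). F U) = (\<Sum>U\<in>Pow J. F U) + (\<Sum>U\<in>insert a ` Pow J. F U)"
    unfolding Pow_insert using assms disj by (intro sum.union_disjoint) auto
  also have "(\<Sum>U\<in>insert a ` Pow J. F U) = (\<Sum>U\<in>Pow J. F (insert a U))"
    by (rule sum.reindex[OF inj, unfolded comp_def])
  finally show ?thesis .
qed

lemma set_prob_insert_out:
  assumes "finite J" "a \<notin> J" "U \<subseteq> J"
  shows "set_prob (insert a J) z U = (1 - z a) * set_prob J z U"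
proof -
  have e: "insert a J - U = insert a (J - U)" using assms by auto
  have "(\<Prod>i\<in>insert a J - U. 1 - z i) = (1 - z a) * (\<Prod>i\<in>J - U. 1 - z i)"
    unfolding e using assms by (intro prod.insert) auto
  then show ?thesis unfolding set_prob_def by (simp only: mult.left_commute)
qed

lemma set_prob_insert_in:
  assumes "finite J" "a \<notin> J" "U \<subseteq> J"
  shows "set_prob (insert a J) z (insert a U) = z a * set_prob J z U"
proof -
  have e: "insert a J - insert a U = J - U" using assms by auto
  have "finite U" using assms finite_subset by auto
  moreover have "a \<notin> U" using assms by auto
  ultimately have "(\<Prod>i\<in>insert a U. z i) = z a * (\<Prod>i\<in>U. z i)" by (intro prod.insert)
  then show ?thesis unfolding set_prob_def e by (simp only: mult.assoc)
qed

lemma coupling: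
  fixes g :: "('i \<Rightarrow> nat) \<Rightarrow> real"
  assumes "finite J" "\<forall>j\<in>J. (\<Sum>s\<in>{1..B}. p j s) = 1"
  shows "EP J (\<lambda>_. {0..B}) 0 (hq p yb) g
       = (\<Sum>U\<in>Pow J. set_prob J yb U * EP J (\<lambda>_. {1..B}) undefined p (\<lambda>\<phi>. g (restr_state \<phi> U)))"
  using assms
proof (induction J arbitrary: g rule: finite_induct)
  case empty
  show ?case by (simp add: EP_empty set_prob_def restr_state_def)
next
  case (insert a J)
  have finD: "\<forall>j\<in>insert a J. finite ((\<lambda>_. {0..B::nat}) j)" "\<forall>j\<in>insert a J. finite ((\<lambda>_. {1..B::nat}) j)" by auto
  have pJ: "\<forall>j\<in>J. (\<Sum>s\<in>{1..B}. p j s) = 1" using insert.prems by simp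
  have pa: "(\<Sum>s\<in>{1..B}. p a s) = 1" using insert.prems by simp
  define R where "R = (\<lambda>g. \<Sum>U\<in>Pow J. set_prob J yb U * EP J (\<lambda>_. {1..B}) undefined p (\<lambda>\<phi>. g (restr_state \<phi> U)))"
  have IH: "EP J (\<lambda>_. {0..B}) 0 (hq p yb) g' = R g'" for g' unfolding R_def by (rule insert.IH[OF pJ])
  have "EP (insert a J) (\<lambda>_. {0..B}) 0 (hq p yb) g = (\<Sum>s\<in>{0..B}. hq p yb a s * R (\<lambda>x. g (x(a:=s))))"
    unfolding EP_insert[OF insert.hyps finD(1)] IH ..
  also have "\<dots> = hq p yb a 0 * R (\<lambda>x. g (x(a:=0))) + (\<Sum>s\<in>{1..B}. hq p yb a s * R (\<lambda>x. g (x(a:=s))))"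
  proof -
    have "{0..B} = insert 0 {1..B}" by auto
    then show ?thesis by simp
  qed
  also have "\<dots> = (1 - yb a) * R (\<lambda>x. g (x(a:=0))) + (\<Sum>s\<in>{1..B}. yb a * p a s * R (\<lambda>x. g (x(a:=s))))"
    unfolding hq_def by (intro arg_cong2[where f="(+)"] sum.cong) auto
  finally have L: "EP (insert a J) (\<lambda>_. {0..B}) 0 (hq p yb) g = \<dots>" .
  have r1: "restr_state (\<phi>(a:=s)) U = (restr_state \<phi> U)(a:=0)" if "U \<subseteq> J" for \<phi> s U
    using that insert.hyps unfolding restr_state_def by (intro ext) auto
  have r2: "restr_state (\<phi>(a:=s)) (insert a U) = (restr_state \<phi> U)(a:=s)" for \<phi> s U
    unfolding restr_state_def by (intro ext) auto
  have E1: "EP (insert a J) (\<lambda>_. {1..B}) undefined p (\<lambda>\<phi>. g (restr_state \<phi> U))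
      = EP J (\<lambda>_. {1..B}) undefined p (\<lambda>\<phi>. g ((restr_state \<phi> U)(a:=0)))" if "U \<subseteq> J" for U
  proof -
    have "EP (insert a J) (\<lambda>_. {1..B}) undefined p (\<lambda>\<phi>. g (restr_state \<phi> U))
       = (\<Sum>s\<in>{1..B}. p a s * EP J (\<lambda>_. {1..B}) undefined p (\<lambda>\<phi>. g (restr_state (\<phi>(a:=s)) U)))"
      by (rule EP_insert[OF insert.hyps finD(2)])
    also have "\<dots> = (\<Sum>s\<in>{1..B}. p a s) * EP J (\<lambda>_. {1..B}) undefined p (\<lambda>\<phi>. g ((restr_state \<phi> U)(a:=0)))"
      unfolding r1[OF that] by (simp add: sum_distrib_right)
    finally show ?thesis using pa by simp
  qed
  have E2: "EP (insert a J) (\<lambda>_. {1..B}) undefined p (\<lambda>\<phi>. g (restr_state \<phi> (insert a U)))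
      = (\<Sum>s\<in>{1..B}. p a s * EP J (\<lambda>_. {1..B}) undefined p (\<lambda>\<phi>. g ((restr_state \<phi> U)(a:=s))))" for U
    unfolding EP_insert[OF insert.hyps finD(2)] r2 ..
  have "(\<Sum>U\<in>Pow (insert a J). set_prob (insert a J) yb U * EP (insert a J) (\<lambda>_. {1..B}) undefined p (\<lambda>\<phi>. g (restr_state \<phi> U)))
      = (\<Sum>U\<in>Pow J. set_prob (insert a J) yb U * EP (insert a J) (\<lambda>_. {1..B}) undefined p (\<lambda>\<phi>. g (restr_state \<phi> U)))
        + (\<Sum>U\<in>Pow J. set_prob (insert a J) yb (insert a U) * EP (insert a J) (\<lambda>_. {1..B}) undefined p (\<lambda>\<phi>. g (restr_state \<phi> (insert a U))))"
    by (rule sum_Pow_insert[OF insert.hyps])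
  also have "\<dots> = (\<Sum>U\<in>Pow J. (1 - yb a) * (set_prob J yb U * EP J (\<lambda>_. {1..B}) undefined p (\<lambda>\<phi>. g ((restr_state \<phi> U)(a:=0)))))
        + (\<Sum>U\<in>Pow J. \<Sum>s\<in>{1..B}. yb a * p a s * (set_prob J yb U * EP J (\<lambda>_. {1..B}) undefined p (\<lambda>\<phi>. g ((restr_state \<phi> U)(a:=s)))))"
  proof (intro arg_cong2[where f="(+)"] sum.cong refl)
    fix U assume "U \<in> Pow J"
    then have U: "U \<subseteq> J" by simp
    show "set_prob (insert a J) yb U * EP (insert a J) (\<lambda>_. {1..B}) undefined p (\<lambda>\<phi>. g (restr_state \<phi> U))
       = (1 - yb a) * (set_prob J yb U * EP J (\<lambda>_. {1..B}) undefined p (\<lambda>\<phi>. g ((restr_state \<phi> U)(a:=0))))"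
      unfolding set_prob_insert_out[OF insert.hyps U] E1[OF U] by (simp only: mult_ac)
  next
    fix U assume "U \<in> Pow J"
    then have U: "U \<subseteq> J" by simp
    show "set_prob (insert a J) yb (insert a U) * EP (insert a J) (\<lambda>_. {1..B}) undefined p (\<lambda>\<phi>. g (restr_state \<phi> (insert a U)))
       = (\<Sum>s\<in>{1..B}. yb a * p a s * (set_prob J yb U * EP J (\<lambda>_. {1..B}) undefined p (\<lambda>\<phi>. g ((restr_state \<phi> U)(a:=s)))))"
      unfolding set_prob_insert_in[OF insert.hyps U] E2 sum_distrib_left by (rule sum.cong) (simp_all add: mult_ac)
  qed
  also have "\<dots> = (1 - yb a) * R (\<lambda>x. g (x(a:=0))) + (\<Sum>s\<in>{1..B}. yb a * p a s * R (\<lambda>x. g (x(a:=s))))"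
    unfolding R_def sum_distrib_left
    by (intro arg_cong2[where f="(+)"] refl sum.swap)
  finally show ?case using L by simp
qed

lemma restr_state_empty: "restr_state v {} = (\<lambda>_. 0)"
  unfolding restr_state_def by auto

lemma restr_state_full: "v \<in> vecs I B \<Longrightarrow> restr_state v I = v"
  unfolding restr_state_def vecs_def by (intro ext) auto

lemma take_Suc_set: "k < length xs \<Longrightarrow> set (take (Suc k) xs) = insert (xs ! k) (set (take k xs))"
  by (simp add: take_Suc_conv_app_nth)

lemma nth_notin_take: "distinct xs \<Longrightarrow> k < length xs \<Longrightarrow> xs ! k \<notin> set (take k xs)"
proof -
  assume "distinct xs" "k < length xs"
  then have "distinct (take (Suc k) xs)" by simp
  then show ?thesis using \<open>k < length xs\<close> by (simp add: take_Suc_conv_app_nth)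
qed

lemma restr_state_vecs: "v \<in> vecs I B \<Longrightarrow> restr_state v S \<in> vecs I B"
  unfolding restr_state_def vecs_def by auto

lemma telescope:
  fixes f :: "('i \<Rightarrow> nat) \<Rightarrow> real"
  assumes "set xs = I" "v \<in> vecs I B"
  shows "f v = f (\<lambda>_. 0) + (\<Sum>k<length xs. f (restr_state v (set (take (Suc k) xs))) - f (restr_state v (set (take k xs))))"
proof -
  have "(\<Sum>k<length xs. f (restr_state v (set (take (Suc k) xs))) - f (restr_state v (set (take k xs))))
      = f (restr_state v (set (take (length xs) xs))) - f (restr_state v (set (take 0 xs)))"
    by (rule sum_lessThan_telescope[where f="\<lambda>n. f (restr_state v (set (take n xs)))"])
  also have "\<dots> = f v - f (\<lambda>_. 0)"
    using assms restr_state_full[OF assms(2)] by (simp add: restr_state_empty)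
  finally show ?thesis by simp
qed

definition Dl :: "(('i \<Rightarrow> nat) \<Rightarrow> real) \<Rightarrow> 'i list \<Rightarrow> nat \<Rightarrow> ('i \<Rightarrow> nat) \<Rightarrow> real" where
  "Dl f xs k v = f (restr_state v (set (take (Suc k) xs))) - f (restr_state v (set (take k xs)))"

lemma psi_bound:
  assumes "set xs = I" "distinct xs" "v \<in> vecs I B"
    and mono: "monotone_vec I B f" and sub: "lattice_submodular I B f"
  shows "f (\<lambda>j. if P j then v j else 0) \<ge> f (\<lambda>_. 0) + (\<Sum>k<length xs. if P (xs ! k) then Dl f xs k v else 0)"
proof -
  define \<psi> where "\<psi> = (\<lambda>j. if P j then v j else 0)"
  have psi: "\<psi> \<in> vecs I B" using assms(3) unfolding \<psi>_def vecs_def by auto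
  have trm: "f (restr_state \<psi> (set (take (Suc k) xs))) - f (restr_state \<psi> (set (take k xs)))
      \<ge> (if P (xs ! k) then Dl f xs k v else 0)" if k: "k < length xs" for k
  proof -
    let ?i = "xs ! k" and ?S = "set (take k xs)"
    have iI: "?i \<in> I" using k assms(1) by auto
    have niS: "?i \<notin> ?S" using nth_notin_take[OF assms(2) k] .
    have S1: "set (take (Suc k) xs) = insert ?i ?S" using take_Suc_set[OF k] .
    show ?thesis
    proof (cases "P ?i")
      case True
      let ?u = "restr_state \<psi> ?S" and ?w = "restr_state v ?S"
      have u: "?u \<in> vecs I B" "?w \<in> vecs I B" using restr_state_vecs psi assms(3) by auto
      have uw: "?u \<le> ?w" unfolding restr_state_def \<psi>_def le_fun_def by auto
      have sB: "v ?i \<in> {0..B}" using assms(3) iI unfolding vecs_def by auto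
      have ui: "?u ?i = 0" "?w ?i = 0" using niS unfolding restr_state_def by auto
      have e1: "restr_state \<psi> (set (take (Suc k) xs)) = ?u(?i := max (?u ?i) (v ?i))"
        unfolding S1 ui using True unfolding restr_state_def \<psi>_def by (intro ext) auto
      have e2: "restr_state v (set (take (Suc k) xs)) = ?w(?i := max (?w ?i) (v ?i))"
        unfolding S1 ui unfolding restr_state_def by (intro ext) auto
      have "f (?u(?i := max (?u ?i) (v ?i))) - f ?u \<ge> f (?w(?i := max (?w ?i) (v ?i))) - f ?w"
        using sub u uw sB iI unfolding lattice_submodular_def by blast
      then show ?thesis using True unfolding Dl_def e1 e2 by simp
    next
      case False
      have "restr_state \<psi> (set (take (Suc k) xs)) = restr_state \<psi> ?S"
        unfolding S1 using False unfolding restr_state_def \<psi>_def by (intro ext) auto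
      then show ?thesis using False by simp
    qed
  qed
  have "f \<psi> = f (\<lambda>_. 0) + (\<Sum>k<length xs. f (restr_state \<psi> (set (take (Suc k) xs))) - f (restr_state \<psi> (set (take k xs))))"
    by (rule telescope[OF assms(1) psi])
  also have "\<dots> \<ge> f (\<lambda>_. 0) + (\<Sum>k<length xs. if P (xs ! k) then Dl f xs k v else 0)"
    using trm by (intro add_left_mono sum_mono) auto
  finally show ?thesis unfolding \<psi>_def .
qed

lemma Dl_nonneg:
  assumes "set xs = I" "v \<in> vecs I B" "monotone_vec I B f" "k < length xs"
  shows "Dl f xs k v \<ge> 0"
proof -
  have "restr_state v (set (take k xs)) \<le> restr_state v (set (take (Suc k) xs))"
    unfolding restr_state_def le_fun_def using set_take_subset_set_take[of k "Suc k" xs] by auto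
  moreover have "restr_state v (set (take k xs)) \<in> vecs I B" "restr_state v (set (take (Suc k) xs)) \<in> vecs I B"
    using restr_state_vecs[OF assms(2)] by auto
  ultimately show ?thesis using assms(3) unfolding Dl_def monotone_vec_def by fastforce
qed

lemma EP_cong2:
  assumes "\<forall>j\<in>J. D j = D' j" "\<forall>j\<in>J. \<forall>s\<in>D j. q j s = q' j s"
  shows "EP J D d q g = EP J D' d q' g"
proof -
  have P: "PD J D d = PD J D' d" using assms(1) unfolding PD_def by auto
  show ?thesis unfolding EP_def P
  proof (rule sum.cong[OF refl])
    fix x assume "x \<in> PD J D' d"
    then have "\<forall>j\<in>J. x j \<in> D j" using P unfolding PD_def by auto
    then have "(\<Prod>j\<in>J. q j (x j)) = (\<Prod>j\<in>J. q' j (x j))" using assms(2) by (intro prod.cong) auto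
    then show "(\<Prod>j\<in>J. q j (x j)) * g x = (\<Prod>j\<in>J. q' j (x j)) * g x" by simp
  qed
qed

lemma vecs_PD: "vecs I B = PD I (\<lambda>_. {0..B}) 0"
  unfolding vecs_def PD_def by auto

locale L6 =
  fixes I :: "'i set" and B C :: nat
    and f :: "('i \<Rightarrow> nat) \<Rightarrow> real"
    and p :: "'i \<Rightarrow> nat \<Rightarrow> real"
    and c :: "'i \<Rightarrow> nat \<Rightarrow> nat"
    and Iout :: "'i set set"
    and \<beta> \<gamma> :: real
    and chi :: "('i \<Rightarrow> real) \<Rightarrow> 'i set \<Rightarrow> 'i set pmf"
    and y :: "'i \<Rightarrow> nat \<Rightarrow> real"
    and x :: "'i \<Rightarrow> nat \<Rightarrow> real"
  assumes finI: "finite I"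
    and B_pos: "B > 0" and C_pos: "C > 0"
    and f_nonneg: "\<forall>u\<in>vecs I B. f u \<ge> 0"
    and f_mono: "monotone_vec I B f"
    and f_sub: "lattice_submodular I B f"
    and p_nonneg: "\<forall>i\<in>I. \<forall>s\<in>{1..B}. p i s \<ge> 0"
    and p_sum: "\<forall>i\<in>I. (\<Sum>s\<in>{1..B}. p i s) = 1"
    and c_mono: "\<forall>i\<in>I. \<forall>s\<in>{1..B}. \<forall>s'\<in>{1..B}. s' \<le> s \<longrightarrow> c i s' \<le> c i s"
    and Iout_dc: "downward_closed I Iout"
    and \<beta>_range: "0 \<le> \<beta>" "\<beta> \<le> 1"
    and \<gamma>_range: "0 \<le> \<gamma>" "\<gamma> \<le> 1"
    and crs: "monotone_balanced_CRS I Iout \<beta> \<gamma> chi"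
    and feas: "P1_feasible I B p c C Iout x"
    and ydef: "y = (\<lambda>i t. min \<beta> (1/4) * x i t)"
begin

definition "l = min \<beta> (1/4)"
definition "yb = xbar B C c y"
definition "Dt j = (if yb j > 0 then {1..C - c j B} else {0::nat})"
definition "qt j t = (if yb j > 0 then y j t / yb j else 1)"
definition "hv = hq p yb"

lemma l_range: "0 \<le> l" "l \<le> 1/4" "2 * l = min (2 * \<beta>) (1/2)"
  unfolding l_def using \<beta>_range by auto

lemma x_nonneg: "x i t \<ge> 0"
  using feas unfolding P1_feasible_def by (cases "i \<in> I \<and> t \<in> {1..C - c i B}") auto

lemma x_zero: "\<not> (i \<in> I \<and> t \<in> {1..C - c i B}) \<Longrightarrow> x i t = 0"
  using feas unfolding P1_feasible_def by auto

lemma y_eq: "y i t = l * x i t" unfolding ydef l_def by simp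

lemma y_nonneg: "y i t \<ge> 0" using y_eq x_nonneg l_range by simp

lemma yb_eq: "yb i = l * xbar B C c x i"
  unfolding yb_def xbar_def y_eq by (simp add: sum_distrib_left)

lemma xbar_nonneg: "xbar B C c x i \<ge> 0"
  unfolding xbar_def using x_nonneg by (simp add: sum_nonneg)

lemma xbar_le1: "i \<in> I \<Longrightarrow> xbar B C c x i \<le> 1"
  using feas unfolding P1_feasible_def by auto

lemma yb_nonneg: "yb i \<ge> 0" using yb_eq xbar_nonneg l_range by simp

lemma yb_le: "i \<in> I \<Longrightarrow> yb i \<le> 1/4"
proof -
  assume "i \<in> I"
  then have "l * xbar B C c x i \<le> l * 1" using xbar_le1 l_range by (intro mult_left_mono) auto
  then show ?thesis using yb_eq l_range by simp
qed

lemma hv_nonneg: "i \<in> I \<Longrightarrow> s \<in> {0..B} \<Longrightarrow> hv i s \<ge> 0"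
  unfolding hv_def hq_def using yb_le[of i] yb_nonneg[of i] p_nonneg by auto

lemma hv_sum: "i \<in> I \<Longrightarrow> (\<Sum>s\<in>{0..B}. hv i s) = 1"
proof -
  assume i: "i \<in> I"
  have "{0..B} = insert 0 {1..B}" by auto
  then have "(\<Sum>s\<in>{0..B}. hv i s) = hv i 0 + (\<Sum>s\<in>{1..B}. hv i s)" by simp
  also have "(\<Sum>s\<in>{1..B}. hv i s) = (\<Sum>s\<in>{1..B}. p i s) * yb i"
    unfolding hv_def hq_def sum_distrib_right by (rule sum.cong) auto
  finally show ?thesis using p_sum i unfolding hv_def hq_def by simp
qed

lemma Dt_fin: "finite (Dt j)" unfolding Dt_def by auto

lemma qt_nonneg: "qt j t \<ge> 0" unfolding qt_def using y_nonneg yb_nonneg by auto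

lemma qt_sum: "sum (qt j) (Dt j) = 1"
proof (cases "yb j > 0")
  case True
  have "sum (qt j) (Dt j) = (\<Sum>t\<in>{1..C - c j B}. y j t) / yb j"
    unfolding Dt_def qt_def using True by (simp add: sum_divide_distrib)
  also have "(\<Sum>t\<in>{1..C - c j B}. y j t) = yb j" unfolding yb_def xbar_def ..
  finally show ?thesis using True by simp
next
  case False
  then show ?thesis unfolding Dt_def qt_def by simp
qed

lemma yb_in_scaled: "yb \<in> scaled_set \<beta> (indicator_polytope Iout)"
proof -
  obtain w where w: "\<forall>S\<in>Iout. w S \<ge> 0" "sum w Iout = 1"
     "xbar B C c x = (\<lambda>i. \<Sum>S\<in>Iout. w S * indicator S i)"
    using feas unfolding P1_feasible_def indicator_polytope_def by auto
  have finA: "finite Iout" using Iout_dc finI unfolding downward_closed_def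
    by (meson finite_Pow_iff rev_finite_subset)
  have ne: "Iout \<noteq> {}" using w(2) by auto
  then have emp: "{} \<in> Iout" using Iout_dc unfolding downward_closed_def by blast
  show ?thesis
  proof (cases "\<beta> = 0")
    case True
    then have "yb = (\<lambda>i. \<beta> * xbar B C c x i)" using yb_eq l_def by (auto simp: fun_eq_iff)
    then show ?thesis unfolding scaled_set_def
      using feas unfolding P1_feasible_def by blast
  next
    case False
    then have bpos: "\<beta> > 0" using \<beta>_range by simp
    define r where "r = l / \<beta>"
    have r: "0 \<le> r" "r \<le> 1" unfolding r_def l_def using bpos by (auto simp: min_def)
    define w' where "w' = (\<lambda>S. r * w S + (if S = {} then 1 - r else 0))"
    have mem: "(\<lambda>i. r * xbar B C c x i) \<in> indicator_polytope Iout"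
      unfolding indicator_polytope_def
    proof (intro CollectI exI conjI)
      show "\<forall>S\<in>Iout. 0 \<le> w' S" unfolding w'_def using w(1) r by auto
      show "sum w' Iout = 1"
        unfolding w'_def using w(2) finA emp by (simp add: sum.distrib sum_distrib_left[symmetric])
      show "(\<lambda>i. r * xbar B C c x i) = (\<lambda>i. \<Sum>S\<in>Iout. w' S * indicator S i)"
      proof -
        have z: "(\<Sum>S\<in>Iout. indicator S i * (if S = {} then 1 - r else 0)) = (0::real)" for i
          by (rule sum.neutral) (auto simp: indicator_def)
        show ?thesis
          unfolding w'_def w(3) using z by (auto simp: fun_eq_iff algebra_simps sum.distrib sum_distrib_left)
      qed
    qed
    have eq: "yb = (\<lambda>i. \<beta> * (r * xbar B C c x i))"
      using bpos unfolding r_def by (auto simp: fun_eq_iff yb_eq)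
    show ?thesis unfolding scaled_set_def eq using imageI[OF mem, of "\<lambda>x i. \<beta> * x i"] by simp
  qed
qed

lemma crs_supp: "R \<subseteq> I \<Longrightarrow> set_pmf (chi yb R) \<subseteq> {T. T \<subseteq> R \<and> T \<in> Iout}"
  using crs yb_in_scaled unfolding monotone_balanced_CRS_def by auto

lemma crs_bal: "i \<in> I \<Longrightarrow> (\<Sum>R\<in>{R\<in>Pow I. i \<in> R}. set_prob I yb R * measure_pmf.prob (chi yb R) {T. i \<in> T}) \<ge> \<gamma> * yb i"
  using crs yb_in_scaled unfolding monotone_balanced_CRS_def by auto

lemma crs_mono: "i \<in> R \<Longrightarrow> R \<subseteq> R' \<Longrightarrow> R' \<subseteq> I \<Longrightarrow>
    measure_pmf.prob (chi yb R) {T. i \<in> T} \<ge> measure_pmf.prob (chi yb R') {T. i \<in> T}"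
  using crs yb_in_scaled unfolding monotone_balanced_CRS_def by blast

end

context L6 begin

definition "Phi v tt = (\<Sum>T\<in>Pow (Rset I v). pmf (chi yb (Rset I v)) T * f (psi_c I c v T tt))"

lemma keep_b_restr:
  "keep_b I c v (\<lambda>j. if j \<in> Rset I v then tt j else d) j = keep_b I c v tt j"
proof (cases "j \<in> Rset I v")
  case True
  have "{i' \<in> Rset I v - {j}. (if i' \<in> Rset I v then tt i' else d) \<le> (if j \<in> Rset I v then tt j else d)}
      = {i' \<in> Rset I v - {j}. tt i' \<le> tt j}" using True by auto
  then show ?thesis unfolding keep_b_def using True by simp
next
  case False
  then show ?thesis unfolding keep_b_def by simp
qed

lemma Phi_restr: "Phi v (\<lambda>j. if j \<in> Rset I v then tt j else d) = Phi v tt"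
  unfolding Phi_def psi_c_def keep_b_restr ..

lemma h_prob_eq: "h_prob I p yb v = (\<Prod>j\<in>I. hv j (v j))"
  unfolding h_prob_def hv_def hq_def ..

lemma M1: "expected_psi_c I B p c C chi f y = EP I (\<lambda>_. {0..B}) 0 hv (\<lambda>v. EP I Dt undefined qt (Phi v))"
proof -
  have "expected_psi_c I B p c C chi f y
     = (\<Sum>v\<in>PD I (\<lambda>_. {0..B}) 0. (\<Prod>j\<in>I. hv j (v j)) *
          EP (Rset I v) (\<lambda>i. {1..C - c i B}) undefined (\<lambda>i t. y i t / yb i) (Phi v))"
    unfolding expected_psi_c_def Let_def yb_def[symmetric] vecs_PD h_prob_eq EP_def PD_PiE Phi_def ..
  also have "\<dots> = EP I (\<lambda>_. {0..B}) 0 hv (\<lambda>v. EP I Dt undefined qt (Phi v))"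
    unfolding EP_def[of I "\<lambda>_. {0..B}"]
  proof (rule sum.cong[OF refl])
    fix v assume v: "v \<in> PD I (\<lambda>_. {0..B}) 0"
    show "(\<Prod>j\<in>I. hv j (v j)) * EP (Rset I v) (\<lambda>i. {1..C - c i B}) undefined (\<lambda>i t. y i t / yb i) (Phi v)
        = (\<Prod>j\<in>I. hv j (v j)) * EP I Dt undefined qt (Phi v)"
    proof (cases "(\<Prod>j\<in>I. hv j (v j)) = 0")
      case True
      then show ?thesis by simp
    next
      case False
      have pos: "yb j > 0" if "j \<in> Rset I v" for j
      proof -
        have "hv j (v j) \<noteq> 0" using False finI that unfolding Rset_def by auto
        then have "yb j \<noteq> 0" using that unfolding Rset_def hv_def hq_def by auto
        then show ?thesis using yb_nonneg[of j] by simp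
      qed
      have RI: "Rset I v \<subseteq> I" unfolding Rset_def by auto
      have "EP (Rset I v) (\<lambda>i. {1..C - c i B}) undefined (\<lambda>i t. y i t / yb i) (Phi v)
          = EP (Rset I v) Dt undefined qt (Phi v)"
        by (rule EP_cong2) (auto simp: Dt_def qt_def pos)
      also have "\<dots> = EP (Rset I v \<union> (I - Rset I v)) Dt undefined qt
            (\<lambda>tt. Phi v (\<lambda>j. if j \<in> Rset I v then tt j else undefined))"
        by (rule EP_marginal[symmetric]) (use finI RI Dt_fin qt_sum in \<open>auto intro: finite_subset\<close>)
      also have "\<dots> = EP I Dt undefined qt (Phi v)"
        unfolding Phi_restr using RI by (simp add: Un_absorb1)
      finally show ?thesis by simp
    qed
  qed
  finally show ?thesis .
qed


lemma pmf_sum_ind: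
  assumes "finite S" "set_pmf M \<subseteq> S"
  shows "(\<Sum>T\<in>S. pmf M T * (if Q T then 1 else 0)) = measure_pmf.prob M {T. Q T}"
proof -
  have "(\<Sum>T\<in>S. pmf M T * (if Q T then 1 else 0)) = (\<Sum>T\<in>S. if Q T then pmf M T else 0)"
    by (rule sum.cong) auto
  also have "\<dots> = sum (pmf M) {T\<in>S. Q T}"
    using assms(1) by (rule sum.inter_filter[symmetric])
  also have "\<dots> = sum (pmf M) (S \<inter> {T. Q T})" by (rule arg_cong[where f="sum (pmf M)"]) auto
  also have "\<dots> = measure_pmf.prob M (S \<inter> {T. Q T})"
    using assms(1) by (simp add: measure_measure_pmf_finite)
  also have "\<dots> = measure_pmf.prob M (S \<inter> {T. Q T} \<inter> set_pmf M)"
    by (rule measure_Int_set_pmf[symmetric])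
  also have "S \<inter> {T. Q T} \<inter> set_pmf M = {T. Q T} \<inter> set_pmf M" using assms(2) by auto
  also have "measure_pmf.prob M \<dots> = measure_pmf.prob M {T. Q T}"
    by (rule measure_Int_set_pmf)
  finally show ?thesis .
qed

definition "xs = (SOME xs. set xs = I \<and> distinct xs)"

lemma xs_props: "set xs = I" "distinct xs"
proof -
  have "\<exists>xs. set xs = I \<and> distinct xs" using finite_distinct_list[OF finI] .
  then have "set xs = I \<and> distinct xs" unfolding xs_def by (rule someI_ex)
  then show "set xs = I" "distinct xs" by auto
qed

definition "Pa k R = measure_pmf.prob (chi yb R) {T. xs ! k \<in> T}"
definition "Kk k v tt = (if keep_b I c v tt (xs ! k) then 1 else 0::real)"
definition "Dk k v = Dl f xs k v"
definition "f0 = f (\<lambda>_. 0)"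

lemma M2:
  assumes v: "v \<in> PD I (\<lambda>_. {0..B}) 0"
  shows "Phi v tt \<ge> f0 + (\<Sum>k<length xs. Dk k v * Pa k (Rset I v) * Kk k v tt)"
proof -
  let ?R = "Rset I v"
  have RI: "?R \<subseteq> I" unfolding Rset_def by auto
  have finR: "finite (Pow ?R)" using finI RI by (auto intro: finite_subset)
  have supp: "set_pmf (chi yb ?R) \<subseteq> Pow ?R" using crs_supp[OF RI] by auto
  have vV: "v \<in> vecs I B" unfolding vecs_PD using v .
  have one: "(\<Sum>T\<in>Pow ?R. pmf (chi yb ?R) T) = 1"
    using pmf_sum_ind[OF finR supp, of "\<lambda>_. True"] by simp
  have bnd: "f (psi_c I c v T tt) \<ge> f0 + (\<Sum>k<length xs. if xs ! k \<in> T \<and> keep_b I c v tt (xs ! k) then Dk k v else 0)" for T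
    unfolding psi_c_def f0_def Dk_def
    by (rule psi_bound[OF xs_props vV f_mono f_sub])
  have "f0 + (\<Sum>k<length xs. Dk k v * Pa k ?R * Kk k v tt) = f0 * (\<Sum>T\<in>Pow ?R. pmf (chi yb ?R) T)
      + (\<Sum>k<length xs. Dk k v * Kk k v tt * (\<Sum>T\<in>Pow ?R. pmf (chi yb ?R) T * (if xs ! k \<in> T then 1 else 0)))"
    unfolding one Pa_def pmf_sum_ind[OF finR supp] by (simp add: mult_ac)
  also have "\<dots> = (\<Sum>T\<in>Pow ?R. pmf (chi yb ?R) T * (f0 + (\<Sum>k<length xs. if xs ! k \<in> T \<and> keep_b I c v tt (xs ! k) then Dk k v else 0)))"
    unfolding distrib_left sum.distrib sum_distrib_left sum_distrib_right
    by (subst sum.swap[of _ "{..<length xs}"]) (auto intro!: sum.cong simp: Kk_def mult_ac)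
  also have "\<dots> \<le> Phi v tt"
    unfolding Phi_def using bnd by (intro sum_mono mult_left_mono) auto
  finally show ?thesis .
qed

end

context L6 begin

lemma hv_nn: "\<forall>j\<in>I. \<forall>s\<in>{0..B}. 0 \<le> hv j s" using hv_nonneg by auto
lemma hv_nn': "\<forall>j\<in>J. \<forall>s\<in>{0..B}. 0 \<le> hv j s" if "J \<subseteq> I" using hv_nonneg that by auto
lemma qt_nn: "\<forall>j\<in>J. \<forall>s\<in>Dt j. 0 \<le> qt j s" using qt_nonneg by auto
lemma hv_sum': "\<forall>j\<in>J. sum (hv j) {0..B} = 1" if "J \<subseteq> I" using hv_sum that by auto

lemma EV_const: "J \<subseteq> I \<Longrightarrow> EP J (\<lambda>_. {0..B}) 0 hv (\<lambda>_. cc) = cc"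
  by (rule EP_const) (use hv_sum finI in \<open>auto intro: finite_subset\<close>)

lemma ET_const: "EP I Dt undefined qt (\<lambda>_. cc) = cc"
  by (rule EP_const) (use qt_sum finI Dt_fin in auto)

lemma M3: "expected_psi_c I B p c C chi f y \<ge>
    f0 + (\<Sum>k<length xs. EP I (\<lambda>_. {0..B}) 0 hv (\<lambda>v. EP I Dt undefined qt (\<lambda>tt. Dk k v * Pa k (Rset I v) * Kk k v tt)))"
proof -
  have fT: "\<forall>j\<in>I. finite (Dt j)" using Dt_fin by auto
  have sT: "\<forall>j\<in>I. sum (qt j) (Dt j) = 1" using qt_sum by auto
  have "f0 + (\<Sum>k<length xs. EP I (\<lambda>_. {0..B}) 0 hv (\<lambda>v. EP I Dt undefined qt (\<lambda>tt. Dk k v * Pa k (Rset I v) * Kk k v tt)))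
     = EP I (\<lambda>_. {0..B}) 0 hv (\<lambda>v. EP I Dt undefined qt (\<lambda>tt. f0 + (\<Sum>k<length xs. Dk k v * Pa k (Rset I v) * Kk k v tt)))"
    unfolding EP_add EP_sum ET_const EV_const[OF order_refl] by simp
  also have "\<dots> \<le> EP I (\<lambda>_. {0..B}) 0 hv (\<lambda>v. EP I Dt undefined qt (Phi v))"
    by (intro EP_mono[OF hv_nn] EP_mono[OF qt_nn] M2)
  also have "\<dots> = expected_psi_c I B p c C chi f y" by (rule M1[symmetric])
  finally show ?thesis .
qed

lemma M5: "multilinear_ext I (fbar I B p f) yb = f0 + (\<Sum>k<length xs. EP I (\<lambda>_. {0..B}) 0 hv (Dk k))"
proof -
  have "multilinear_ext I (fbar I B p f) yb
      = (\<Sum>U\<in>Pow I. set_prob I yb U * EP I (\<lambda>_. {1..B}) undefined p (\<lambda>\<phi>. f (restr_state \<phi> U)))"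
    unfolding multilinear_ext_def fbar_def set_prob_def EP_def PD_PiE by (simp add: mult.assoc)
  also have "\<dots> = EP I (\<lambda>_. {0..B}) 0 hv f"
    unfolding hv_def by (rule coupling[symmetric, OF finI p_sum])
  also have "\<dots> = EP I (\<lambda>_. {0..B}) 0 hv (\<lambda>v. f0 + (\<Sum>k<length xs. Dk k v))"
  proof (rule EP_cong)
    fix v assume "v \<in> PD I (\<lambda>_. {0..B}) 0"
    then have "v \<in> vecs I B" unfolding vecs_PD .
    then show "f v = f0 + (\<Sum>k<length xs. Dk k v)"
      unfolding f0_def Dk_def Dl_def by (rule telescope[OF xs_props(1)])
  qed
  also have "\<dots> = f0 + (\<Sum>k<length xs. EP I (\<lambda>_. {0..B}) 0 hv (Dk k))"
    unfolding EP_add EP_sum EV_const[OF order_refl] by simp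
  finally show ?thesis .
qed

end

lemma EP_swap:
  "EP J1 D1 d1 q1 (\<lambda>w. EP J2 D2 d2 q2 (\<lambda>t. h w t)) = EP J2 D2 d2 q2 (\<lambda>t. EP J1 D1 d1 q1 (\<lambda>w. h w t))"
  unfolding EP_def sum_distrib_left
  by (subst sum.swap) (simp add: mult_ac)

context L6 begin

lemma xs_nth_I: "k < length xs \<Longrightarrow> xs ! k \<in> I"
  using nth_mem[of k xs] xs_props(1) by simp

lemma PD_upd_vecs:
  assumes "w \<in> PD (I - {i}) (\<lambda>_. {0..B}) 0" "i \<in> I" "s \<le> B"
  shows "w(i:=s) \<in> vecs I B"
  using assms unfolding PD_def vecs_def by auto

lemma Dk_zero:
  assumes "k < length xs" "v (xs ! k) = 0"
  shows "Dk k v = 0"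
proof -
  have "restr_state v (set (take (Suc k) xs)) = restr_state v (set (take k xs))"
    unfolding take_Suc_set[OF assms(1)] restr_state_def using assms(2) by (intro ext) auto
  then show ?thesis unfolding Dk_def Dl_def by simp
qed

lemma anti_G:
  assumes k: "k < length xs" and s: "s \<le> B"
  shows "antitone_on_PD (I - {xs ! k}) (\<lambda>_. {0..B}) 0 (\<lambda>w. Dk k (w(xs ! k := s)))"
  unfolding antitone_on_PD_def
proof (intro ballI impI)
  let ?i = "xs ! k" and ?S = "set (take k xs)"
  have iI: "?i \<in> I" using xs_nth_I[OF k] .
  have niS: "?i \<notin> ?S" using nth_notin_take[OF xs_props(2) k] .
  fix w w' assume w: "w \<in> PD (I - {?i}) (\<lambda>_. {0..B}) 0" and w': "w' \<in> PD (I - {?i}) (\<lambda>_. {0..B}) 0"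
    and le: "\<forall>j\<in>I - {?i}. w j \<le> w' j"
  let ?u = "restr_state (w(?i:=s)) ?S" and ?u' = "restr_state (w'(?i:=s)) ?S"
  have uv: "?u \<in> vecs I B" "?u' \<in> vecs I B"
    using restr_state_vecs PD_upd_vecs[OF w iI s] PD_upd_vecs[OF w' iI s] by auto
  have uu: "?u \<le> ?u'"
    unfolding le_fun_def restr_state_def using le w w' unfolding PD_def by auto
  have ui: "?u ?i = 0" "?u' ?i = 0" using niS unfolding restr_state_def by auto
  have e: "restr_state (v(?i:=s)) (set (take (Suc k) xs)) = (restr_state (v(?i:=s)) ?S)(?i := max (restr_state (v(?i:=s)) ?S ?i) s)" for v
    unfolding take_Suc_set[OF k] using niS unfolding restr_state_def by (intro ext) auto
  have "f (?u(?i := max (?u ?i) s)) - f ?u \<ge> f (?u'(?i := max (?u' ?i) s)) - f ?u'"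
    using f_sub uv uu s iI unfolding lattice_submodular_def by auto
  then show "Dk k (w'(?i := s)) \<le> Dk k (w(?i := s))"
    unfolding Dk_def Dl_def e by linarith
qed

lemma Rset_upd_mono:
  assumes "w \<in> PD (I - {i}) (\<lambda>_. {0..B}) 0" "w' \<in> PD (I - {i}) (\<lambda>_. {0..B}) 0" "\<forall>j\<in>I - {i}. w j \<le> w' j"
  shows "Rset I (w(i:=s)) \<subseteq> Rset I (w'(i:=s))"
proof
  fix j assume j: "j \<in> Rset I (w(i:=s))"
  show "j \<in> Rset I (w'(i:=s))"
  proof (cases "j = i")
    case True
    then show ?thesis using j unfolding Rset_def by auto
  next
    case False
    then have "j \<in> I - {i}" "w j \<noteq> 0" using j unfolding Rset_def by auto
    moreover then have "w j \<le> w' j" using assms(3) by auto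
    ultimately show ?thesis using False unfolding Rset_def by auto
  qed
qed

lemma anti_A:
  assumes k: "k < length xs" and s: "s \<noteq> 0"
  shows "antitone_on_PD (I - {xs ! k}) (\<lambda>_. {0..B}) 0 (\<lambda>w. Pa k (Rset I (w(xs ! k := s))))"
  unfolding antitone_on_PD_def
proof (intro ballI impI)
  let ?i = "xs ! k"
  have iI: "?i \<in> I" using xs_nth_I[OF k] .
  fix w w' assume w: "w \<in> PD (I - {?i}) (\<lambda>_. {0..B}) 0" and w': "w' \<in> PD (I - {?i}) (\<lambda>_. {0..B}) 0"
    and le: "\<forall>j\<in>I - {?i}. w j \<le> w' j"
  have "?i \<in> Rset I (w(?i := s))" using iI s unfolding Rset_def by auto
  moreover have "Rset I (w(?i := s)) \<subseteq> Rset I (w'(?i := s))" by (rule Rset_upd_mono[OF w w' le])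
  moreover have "Rset I (w'(?i := s)) \<subseteq> I" unfolding Rset_def by auto
  ultimately show "Pa k (Rset I (w'(?i := s))) \<le> Pa k (Rset I (w(?i := s)))"
    unfolding Pa_def by (rule crs_mono)
qed

lemma anti_K:
  assumes k: "k < length xs"
  shows "antitone_on_PD (I - {xs ! k}) (\<lambda>_. {0..B}) 0 (\<lambda>w. Kk k (w(xs ! k := s)) tt)"
  unfolding antitone_on_PD_def
proof (intro ballI impI)
  let ?i = "xs ! k"
  fix w w' assume w: "w \<in> PD (I - {?i}) (\<lambda>_. {0..B}) 0" and w': "w' \<in> PD (I - {?i}) (\<lambda>_. {0..B}) 0"
    and le: "\<forall>j\<in>I - {?i}. w j \<le> w' j"
  let ?v = "w(?i := s)" and ?v' = "w'(?i := s)"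
  have RR: "Rset I ?v \<subseteq> Rset I ?v'" by (rule Rset_upd_mono[OF w w' le])
  show "Kk k ?v' tt \<le> Kk k ?v tt"
  proof (cases "keep_b I c ?v' tt ?i")
    case False
    then show ?thesis unfolding Kk_def by simp
  next
    case True
    let ?A = "{i' \<in> Rset I ?v - {?i}. tt i' \<le> tt ?i}" and ?A' = "{i' \<in> Rset I ?v' - {?i}. tt i' \<le> tt ?i}"
    have iR: "?i \<in> Rset I ?v" using True unfolding keep_b_def Rset_def by auto
    have AA: "?A \<subseteq> ?A'" using RR by auto
    have finA': "finite ?A'" using finI unfolding Rset_def by auto
    have "(\<Sum>i'\<in>?A. c i' (?v i')) \<le> (\<Sum>i'\<in>?A. c i' (?v' i'))"
    proof (rule sum_mono)
      fix j assume j: "j \<in> ?A"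
      then have jI: "j \<in> I - {?i}" "w j \<noteq> 0" unfolding Rset_def by auto
      have "w' j \<le> B" "w j \<le> w' j" using w' le jI unfolding PD_def by auto
      moreover have "w j \<le> B" using w jI unfolding PD_def by auto
      ultimately show "c j (?v j) \<le> c j (?v' j)" using c_mono jI by auto
    qed
    also have "\<dots> \<le> (\<Sum>i'\<in>?A'. c i' (?v' i'))" by (rule sum_mono2[OF finA' AA]) auto
    also have "\<dots> \<le> tt ?i" using True unfolding keep_b_def by auto
    finally have "keep_b I c ?v tt ?i" unfolding keep_b_def using iR by auto
    then show ?thesis unfolding Kk_def by simp
  qed
qed

lemma EA:
  assumes k: "k < length xs" and s: "s \<noteq> 0" and ybi: "yb (xs ! k) > 0"
  shows "EP (I - {xs ! k}) (\<lambda>_. {0..B}) 0 hv (\<lambda>w. Pa k (Rset I (w(xs ! k := s)))) \<ge> \<gamma>"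
proof -
  let ?i = "xs ! k" let ?J = "I - {?i}"
  have iI: "?i \<in> I" using xs_nth_I[OF k] .
  have finJ: "finite ?J" using finI by auto
  have IJ: "I = insert ?i ?J" using iI by auto
  have pJ: "\<forall>j\<in>?J. (\<Sum>s\<in>{1..B}. p j s) = 1" using p_sum by auto
  have R: "Rset I ((restr_state \<phi> U)(?i := s)) = insert ?i U"
    if "\<phi> \<in> PD ?J (\<lambda>_. {1..B}) undefined" "U \<subseteq> ?J" for \<phi> U
    using that s iI unfolding Rset_def restr_state_def PD_def by force
  have "EP ?J (\<lambda>_. {0..B}) 0 hv (\<lambda>w. Pa k (Rset I (w(?i := s))))
      = (\<Sum>U\<in>Pow ?J. set_prob ?J yb U * EP ?J (\<lambda>_. {1..B}) undefined p (\<lambda>\<phi>. Pa k (Rset I ((restr_state \<phi> U)(?i := s)))))"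
    unfolding hv_def by (rule coupling[OF finJ pJ])
  also have "\<dots> = (\<Sum>U\<in>Pow ?J. set_prob ?J yb U * Pa k (insert ?i U))"
  proof (rule sum.cong[OF refl])
    fix U assume U: "U \<in> Pow ?J"
    have "EP ?J (\<lambda>_. {1..B}) undefined p (\<lambda>\<phi>. Pa k (Rset I ((restr_state \<phi> U)(?i := s))))
        = EP ?J (\<lambda>_. {1..B}) undefined p (\<lambda>\<phi>. Pa k (insert ?i U))"
      using R U by (intro EP_cong) auto
    also have "\<dots> = Pa k (insert ?i U)" by (rule EP_const) (use finJ pJ in auto)
    finally show "set_prob ?J yb U * EP ?J (\<lambda>_. {1..B}) undefined p (\<lambda>\<phi>. Pa k (Rset I ((restr_state \<phi> U)(?i := s))))
        = set_prob ?J yb U * Pa k (insert ?i U)" by simp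
  qed
  finally have E: "EP ?J (\<lambda>_. {0..B}) 0 hv (\<lambda>w. Pa k (Rset I (w(?i := s)))) = (\<Sum>U\<in>Pow ?J. set_prob ?J yb U * Pa k (insert ?i U))" .
  have inj: "inj_on (insert ?i) (Pow ?J)"
  proof (rule inj_onI)
    fix U V assume "U \<in> Pow ?J" "V \<in> Pow ?J" "insert ?i U = insert ?i V"
    moreover have "?i \<notin> U" "?i \<notin> V" using \<open>U \<in> Pow ?J\<close> \<open>V \<in> Pow ?J\<close> by auto
    ultimately show "U = V" by (metis insert_ident)
  qed
  have img: "{R\<in>Pow I. ?i \<in> R} = insert ?i ` Pow ?J" using iI by (auto intro!: image_eqI[where x="R - {?i}" for R])
  have "\<gamma> * yb ?i \<le> (\<Sum>R\<in>{R\<in>Pow I. ?i \<in> R}. set_prob I yb R * Pa k R)"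
    using crs_bal[OF iI] unfolding Pa_def .
  also have "\<dots> = (\<Sum>U\<in>Pow ?J. set_prob I yb (insert ?i U) * Pa k (insert ?i U))"
    unfolding img by (rule sum.reindex[OF inj, unfolded comp_def])
  also have "\<dots> = (\<Sum>U\<in>Pow ?J. yb ?i * (set_prob ?J yb U * Pa k (insert ?i U)))"
  proof (rule sum.cong[OF refl])
    fix U assume "U \<in> Pow ?J"
    then have "set_prob (insert ?i ?J) yb (insert ?i U) = yb ?i * set_prob ?J yb U"
      by (intro set_prob_insert_in finJ) auto
    then show "set_prob I yb (insert ?i U) * Pa k (insert ?i U) = yb ?i * (set_prob ?J yb U * Pa k (insert ?i U))"
      using IJ by simp
  qed
  also have "\<dots> = yb ?i * EP ?J (\<lambda>_. {0..B}) 0 hv (\<lambda>w. Pa k (Rset I (w(?i := s))))"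
    unfolding E sum_distrib_left ..
  finally show ?thesis using ybi by (simp add: mult.commute)
qed

end

context L6 begin

definition "gj j t s' = (if s' = 0 then 0 else real (min (c j s') t))"
definition "Xf i tt w = (\<Sum>j\<in>I - {i}. (if tt j \<le> tt i then 1 else 0) * gj j (tt i) (w j))"

lemma Xf_nonneg: "Xf i tt w \<ge> 0"
  unfolding Xf_def gj_def by (intro sum_nonneg) auto

lemma sum_min_ge:
  fixes A :: "'a set" and g :: "'a \<Rightarrow> nat"
  assumes "finite A" "(\<Sum>j\<in>A. g j) > t"
  shows "(\<Sum>j\<in>A. min (g j) t) \<ge> t"
proof (cases "\<exists>j\<in>A. g j \<ge> t")
  case True
  then obtain j where j: "j \<in> A" "g j \<ge> t" by auto
  have "t = min (g j) t" using j by simp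
  also have "\<dots> \<le> (\<Sum>j\<in>A. min (g j) t)" by (rule member_le_sum[OF j(1)]) (use assms in auto)
  finally show ?thesis .
next
  case False
  then have "(\<Sum>j\<in>A. min (g j) t) = (\<Sum>j\<in>A. g j)" by (intro sum.cong) auto
  then show ?thesis using assms by simp
qed

lemma K_lower:
  assumes k: "k < length xs" and s: "s \<noteq> 0" and t1: "tt (xs ! k) \<ge> 1"
    and w: "w \<in> PD (I - {xs ! k}) (\<lambda>_. {0..B}) 0"
  shows "1 - Kk k (w(xs ! k := s)) tt \<le> (1 / real (tt (xs ! k))) * Xf (xs ! k) tt w"
proof (cases "keep_b I c (w(xs ! k := s)) tt (xs ! k)")
  case True
  then show ?thesis unfolding Kk_def using Xf_nonneg[of "xs ! k" tt w] by simp
next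
  case False
  let ?i = "xs ! k" and ?v = "w(xs ! k := s)" and ?t = "tt (xs ! k)"
  let ?A = "{i' \<in> Rset I ?v - {?i}. tt i' \<le> tt ?i}"
  have iI: "?i \<in> I" by (rule xs_nth_I[OF k])
  have iR: "?i \<in> Rset I ?v" using iI s unfolding Rset_def by simp
  have gt: "(\<Sum>i'\<in>?A. c i' (?v i')) > ?t" using False iR unfolding keep_b_def by auto
  have AJ: "?A \<subseteq> I - {?i}" unfolding Rset_def by auto
  have finJ: "finite (I - {?i})" using finI by simp
  have finA: "finite ?A" using finite_subset[OF AJ finJ] .
  have "(\<Sum>j\<in>?A. c j (w j)) > ?t"
  proof -
    have "(\<Sum>i'\<in>?A. c i' (?v i')) = (\<Sum>j\<in>?A. c j (w j))" by (intro sum.cong) auto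
    then show ?thesis using gt by simp
  qed
  then have "(\<Sum>j\<in>?A. min (c j (w j)) ?t) \<ge> ?t" by (rule sum_min_ge[OF finA])
  then have "real ?t \<le> real (\<Sum>j\<in>?A. min (c j (w j)) ?t)" unfolding of_nat_le_iff .
  also have "\<dots> = (\<Sum>j\<in>?A. (if tt j \<le> tt ?i then 1 else 0) * gj j ?t (w j))"
    unfolding of_nat_sum gj_def by (intro sum.cong) (auto simp: Rset_def)
  also have "\<dots> \<le> Xf ?i tt w"
    unfolding Xf_def by (rule sum_mono2[OF finJ AJ]) (auto simp: gj_def)
  finally have "real ?t \<le> Xf ?i tt w" .
  then have "1 \<le> (1 / real ?t) * Xf ?i tt w" using t1 by (simp add: field_simps)
  then show ?thesis unfolding Kk_def using False by simp
qed

lemma emc_nonneg: "j \<in> I \<Longrightarrow> exp_min_cost B p c j t \<ge> 0"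
  unfolding exp_min_cost_def using p_nonneg by (auto intro!: sum_nonneg)

lemma EJ_gj:
  assumes "j \<in> I"
  shows "(\<Sum>s'\<in>{0..B}. hv j s' * gj j t s') = yb j * exp_min_cost B p c j t"
proof -
  have "{0..B} = insert 0 {1..B}" by auto
  then have "(\<Sum>s'\<in>{0..B}. hv j s' * gj j t s') = (\<Sum>s'\<in>{1..B}. hv j s' * gj j t s')"
    by (simp add: gj_def)
  also have "\<dots> = (\<Sum>s'\<in>{1..B}. yb j * (p j s' * real (min (c j s') t)))"
    unfolding hv_def hq_def gj_def by (intro sum.cong) auto
  finally show ?thesis unfolding exp_min_cost_def sum_distrib_left .
qed

lemma EJ_X:
  assumes k: "k < length xs"
  shows "EP (I - {xs ! k}) (\<lambda>_. {0..B}) 0 hv (Xf (xs ! k) tt)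
     = (\<Sum>j\<in>I - {xs ! k}. (if tt j \<le> tt (xs ! k) then 1 else 0) * (yb j * exp_min_cost B p c j (tt (xs ! k))))"
proof -
  let ?J = "I - {xs ! k}"
  have finJ: "finite ?J" using finI by simp
  have "EP ?J (\<lambda>_. {0..B}) 0 hv (Xf (xs ! k) tt)
     = (\<Sum>j\<in>?J. (if tt j \<le> tt (xs ! k) then 1 else 0) * EP ?J (\<lambda>_. {0..B}) 0 hv (\<lambda>w. gj j (tt (xs ! k)) (w j)))"
    unfolding Xf_def EP_sum EP_cmult ..
  also have "\<dots> = (\<Sum>j\<in>?J. (if tt j \<le> tt (xs ! k) then 1 else 0) * (yb j * exp_min_cost B p c j (tt (xs ! k))))"
  proof (rule sum.cong[OF refl])
    fix j assume j: "j \<in> ?J"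
    have "EP ?J (\<lambda>_. {0..B}) 0 hv (\<lambda>w. gj j (tt (xs ! k)) (w j)) = (\<Sum>s'\<in>{0..B}. hv j s' * gj j (tt (xs ! k)) s')"
      by (rule EP_coord) (use finJ hv_sum j in auto)
    also have "\<dots> = yb j * exp_min_cost B p c j (tt (xs ! k))" using j by (intro EJ_gj) auto
    finally show "(if tt j \<le> tt (xs ! k) then 1 else 0) * EP ?J (\<lambda>_. {0..B}) 0 hv (\<lambda>w. gj j (tt (xs ! k)) (w j))
       = (if tt j \<le> tt (xs ! k) then 1 else 0) * (yb j * exp_min_cost B p c j (tt (xs ! k)))" by simp
  qed
  finally show ?thesis .
qed

definition "Yf i tt = (1 / real (tt i)) * (\<Sum>j\<in>I - {i}. (if tt j \<le> tt i then 1 else 0) * (yb j * exp_min_cost B p c j (tt i)))"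

lemma EJ_K:
  assumes k: "k < length xs" and s: "s \<noteq> 0" and t1: "tt (xs ! k) \<ge> 1"
  shows "EP (I - {xs ! k}) (\<lambda>_. {0..B}) 0 hv (\<lambda>w. Kk k (w(xs ! k := s)) tt) \<ge> 1 - Yf (xs ! k) tt"
proof -
  let ?J = "I - {xs ! k}"
  have qn: "\<forall>j\<in>?J. \<forall>s\<in>{0..B}. 0 \<le> hv j s" using hv_nonneg by auto
  have "EP ?J (\<lambda>_. {0..B}) 0 hv (\<lambda>w. 1 - Kk k (w(xs ! k := s)) tt)
      \<le> EP ?J (\<lambda>_. {0..B}) 0 hv (\<lambda>w. (1 / real (tt (xs ! k))) * Xf (xs ! k) tt w)"
    by (rule EP_mono[OF qn], rule K_lower[where k=k and s=s and tt=tt, OF k s t1])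
  also have "\<dots> = Yf (xs ! k) tt" unfolding EP_cmult EJ_X[OF k] Yf_def ..
  finally have "EP ?J (\<lambda>_. {0..B}) 0 hv (\<lambda>w. 1 - Kk k (w(xs ! k := s)) tt) \<le> Yf (xs ! k) tt" .
  moreover have "EP ?J (\<lambda>_. {0..B}) 0 hv (\<lambda>w. 1 - Kk k (w(xs ! k := s)) tt)
      = 1 - EP ?J (\<lambda>_. {0..B}) 0 hv (\<lambda>w. Kk k (w(xs ! k := s)) tt)"
    unfolding EP_diff EV_const[OF Diff_subset] ..
  ultimately show ?thesis by simp
qed

end

lemma EP_insert':
  assumes "finite J" "a \<in> J" "\<forall>j\<in>J. finite (D j)"
  shows "EP J D d q g = (\<Sum>s\<in>D a. q a s * EP (J - {a}) D d q (\<lambda>x. g (x(a:=s))))"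
proof -
  have "EP (insert a (J - {a})) D d q g = (\<Sum>s\<in>D a. q a s * EP (J - {a}) D d q (\<lambda>x. g (x(a:=s))))"
    by (rule EP_insert) (use assms in auto)
  moreover have "insert a (J - {a}) = J" using assms(2) by auto
  ultimately show ?thesis by simp
qed

lemma EP_cmult_right: "EP J D d q (\<lambda>x. g x * cc) = EP J D d q g * cc"
  using EP_cmult[of J D d q cc g] by (simp add: mult.commute)

context L6 begin

lemma claimQ:
  assumes "t \<ge> 1"
  shows "yb j * (\<Sum>t'\<in>Dt j. qt j t' * (if t' \<le> t then 1 else 0)) \<le> (\<Sum>t'\<in>{1..t}. y j t')"
proof (cases "yb j > 0")
  case True
  have "yb j * (\<Sum>t'\<in>Dt j. qt j t' * (if t' \<le> t then 1 else 0)) = (\<Sum>t'\<in>{1..C - c j B}. y j t' * (if t' \<le> t then 1 else 0))"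
    unfolding Dt_def qt_def sum_distrib_left using True by (intro sum.cong) auto
  also have "\<dots> = (\<Sum>t'\<in>{1..C - c j B}. if t' \<le> t then y j t' else 0)"
    by (intro sum.cong) auto
  also have "\<dots> = (\<Sum>t'\<in>{t'\<in>{1..C - c j B}. t' \<le> t}. y j t')"
    by (rule sum.inter_filter[symmetric]) simp
  also have "\<dots> \<le> (\<Sum>t'\<in>{1..t}. y j t')"
    by (rule sum_mono2) (auto simp: y_nonneg)
  finally show ?thesis .
next
  case False
  then have "yb j = 0" using yb_nonneg[of j] by simp
  then show ?thesis by (simp add: sum_nonneg y_nonneg)
qed

lemma ET_Y:
  assumes k: "k < length xs" and ybi: "yb (xs ! k) > 0"
  shows "EP I Dt undefined qt (Yf (xs ! k)) \<le> 2 * l"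
proof -
  let ?i = "xs ! k" let ?J = "I - {?i}"
  have iI: "?i \<in> I" by (rule xs_nth_I[OF k])
  have finJ: "finite ?J" using finI by simp
  have fD: "\<forall>j\<in>I. finite (Dt j)" using Dt_fin by simp
  have Dti: "Dt ?i = {1..C - c ?i B}" unfolding Dt_def using ybi by simp
  have EPt: "EP ?J Dt undefined qt (\<lambda>tt'. Yf ?i (tt'(?i := t)))
      = (1 / real t) * (\<Sum>j\<in>?J. (\<Sum>t'\<in>Dt j. qt j t' * (if t' \<le> t then 1 else 0)) * (yb j * exp_min_cost B p c j t))" for t
  proof -
    have "EP ?J Dt undefined qt (\<lambda>tt'. Yf ?i (tt'(?i := t)))
       = EP ?J Dt undefined qt (\<lambda>tt'. (1 / real t) * (\<Sum>j\<in>?J. (if tt' j \<le> t then 1 else 0) * (yb j * exp_min_cost B p c j t)))"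
      unfolding Yf_def by (intro EP_cong) (auto intro!: sum.cong)
    also have "\<dots> = (1 / real t) * (\<Sum>j\<in>?J. EP ?J Dt undefined qt (\<lambda>tt'. if tt' j \<le> t then 1 else 0) * (yb j * exp_min_cost B p c j t))"
      unfolding EP_cmult EP_sum EP_cmult_right ..
    also have "\<dots> = (1 / real t) * (\<Sum>j\<in>?J. (\<Sum>t'\<in>Dt j. qt j t' * (if t' \<le> t then 1 else 0)) * (yb j * exp_min_cost B p c j t))"
    proof -
      have "EP ?J Dt undefined qt (\<lambda>tt'. if tt' j \<le> t then 1 else 0) = (\<Sum>t'\<in>Dt j. qt j t' * (if t' \<le> t then 1 else 0))"
        if "j \<in> ?J" for j
        using EP_coord[of ?J Dt qt j undefined "\<lambda>t'. if t' \<le> t then 1 else 0"] finJ Dt_fin qt_sum that by simp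
      then show ?thesis by (intro arg_cong[where f="\<lambda>z. (1 / real t) * z"] sum.cong) auto
    qed
    finally show ?thesis .
  qed
  have bnd: "(1 / real t) * (\<Sum>j\<in>?J. (\<Sum>t'\<in>Dt j. qt j t' * (if t' \<le> t then 1 else 0)) * (yb j * exp_min_cost B p c j t)) \<le> 2 * l"
    if t: "t \<in> Dt ?i" for t
  proof -
    have t1: "1 \<le> t" "t \<le> C" using t Dti by auto
    have "(\<Sum>j\<in>?J. (\<Sum>t'\<in>Dt j. qt j t' * (if t' \<le> t then 1 else 0)) * (yb j * exp_min_cost B p c j t))
        \<le> (\<Sum>j\<in>?J. exp_min_cost B p c j t * (\<Sum>t'\<in>{1..t}. y j t'))"
    proof (rule sum_mono)
      fix j assume j: "j \<in> ?J"
      have "(\<Sum>t'\<in>Dt j. qt j t' * (if t' \<le> t then 1 else 0)) * (yb j * exp_min_cost B p c j t)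
          = exp_min_cost B p c j t * (yb j * (\<Sum>t'\<in>Dt j. qt j t' * (if t' \<le> t then 1 else 0)))" by simp
      also have "\<dots> \<le> exp_min_cost B p c j t * (\<Sum>t'\<in>{1..t}. y j t')"
        using claimQ[OF t1(1)] emc_nonneg j by (intro mult_left_mono) auto
      finally show "(\<Sum>t'\<in>Dt j. qt j t' * (if t' \<le> t then 1 else 0)) * (yb j * exp_min_cost B p c j t)
          \<le> exp_min_cost B p c j t * (\<Sum>t'\<in>{1..t}. y j t')" .
    qed
    also have "\<dots> = l * (\<Sum>j\<in>?J. exp_min_cost B p c j t * (\<Sum>t'\<in>{1..t}. x j t'))"
      unfolding y_eq sum_distrib_left[symmetric] by (simp add: sum_distrib_left mult_ac)
    also have "\<dots> \<le> l * (\<Sum>j\<in>I. exp_min_cost B p c j t * (\<Sum>t'\<in>{1..t}. x j t'))"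
      using l_range emc_nonneg x_nonneg finI
      by (intro mult_left_mono sum_mono2) (auto intro!: mult_nonneg_nonneg sum_nonneg)
    also have "\<dots> \<le> l * (2 * real t)"
      using feas t1 l_range unfolding P1_feasible_def by (intro mult_left_mono) auto
    finally have "(\<Sum>j\<in>?J. (\<Sum>t'\<in>Dt j. qt j t' * (if t' \<le> t then 1 else 0)) * (yb j * exp_min_cost B p c j t)) \<le> l * (2 * real t)" .
    then have "(1 / real t) * (\<Sum>j\<in>?J. (\<Sum>t'\<in>Dt j. qt j t' * (if t' \<le> t then 1 else 0)) * (yb j * exp_min_cost B p c j t))
        \<le> (1 / real t) * (l * (2 * real t))"
      using t1 by (intro mult_left_mono) auto
    also have "\<dots> = 2 * l" using t1 by simp
    finally show ?thesis .
  qed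
  have "EP I Dt undefined qt (Yf ?i) = (\<Sum>t\<in>Dt ?i. qt ?i t * EP ?J Dt undefined qt (\<lambda>tt'. Yf ?i (tt'(?i := t))))"
    by (rule EP_insert'[OF finI iI fD])
  also have "\<dots> \<le> (\<Sum>t\<in>Dt ?i. qt ?i t * (2 * l))"
    unfolding EPt using bnd qt_nonneg by (intro sum_mono mult_left_mono) auto
  also have "\<dots> = 2 * l" using qt_sum[of ?i] by (simp add: sum_distrib_right[symmetric])
  finally show ?thesis .
qed

end

lemma anti_mult:
  assumes "antitone_on_PD J D d g" "antitone_on_PD J D d h"
    "\<And>x. x \<in> PD J D d \<Longrightarrow> g x \<ge> 0" "\<And>x. x \<in> PD J D d \<Longrightarrow> h x \<ge> 0"
  shows "antitone_on_PD J D d (\<lambda>x. g x * h x)"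
  unfolding antitone_on_PD_def
proof (intro ballI impI)
  fix x y assume xy: "x \<in> PD J D d" "y \<in> PD J D d" "\<forall>j\<in>J. x j \<le> y j"
  have "g y \<le> g x" by (rule antitone_on_PD_D[OF assms(1) xy])
  moreover have "h y \<le> h x" by (rule antitone_on_PD_D[OF assms(2) xy])
  ultimately show "g y * h y \<le> g x * h x" using assms(3,4) xy by (intro mult_mono) auto
qed

context L6 begin

lemma EK:
  assumes k: "k < length xs" and s: "s \<noteq> 0" and ybi: "yb (xs ! k) > 0"
  shows "EP I Dt undefined qt (\<lambda>tt. EP (I - {xs ! k}) (\<lambda>_. {0..B}) 0 hv (\<lambda>w. Kk k (w(xs ! k := s)) tt)) \<ge> 1 - 2 * l"
proof -
  let ?i = "xs ! k"
  have iI: "?i \<in> I" by (rule xs_nth_I[OF k])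
  have "1 - 2 * l \<le> 1 - EP I Dt undefined qt (Yf ?i)" using ET_Y[OF k ybi] by simp
  also have "\<dots> = EP I Dt undefined qt (\<lambda>tt. 1 - Yf ?i tt)" unfolding EP_diff ET_const ..
  also have "\<dots> \<le> EP I Dt undefined qt (\<lambda>tt. EP (I - {?i}) (\<lambda>_. {0..B}) 0 hv (\<lambda>w. Kk k (w(?i := s)) tt))"
  proof (rule EP_mono[OF qt_nn])
    fix tt assume tt: "tt \<in> PD I Dt undefined"
    then have "tt ?i \<in> Dt ?i" using iI unfolding PD_def by auto
    then have "tt ?i \<ge> 1" using ybi unfolding Dt_def by auto
    then show "1 - Yf ?i tt \<le> EP (I - {?i}) (\<lambda>_. {0..B}) 0 hv (\<lambda>w. Kk k (w(?i := s)) tt)"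
      by (rule EJ_K[OF k s])
  qed
  finally show ?thesis .
qed

lemma M4core:
  assumes k: "k < length xs" and s: "s \<noteq> 0" "s \<le> B" and ybi: "yb (xs ! k) > 0"
  shows "\<gamma> * (1 - 2 * l) * EP (I - {xs ! k}) (\<lambda>_. {0..B}) 0 hv (\<lambda>w. Dk k (w(xs ! k := s)))
     \<le> EP (I - {xs ! k}) (\<lambda>_. {0..B}) 0 hv (\<lambda>w. EP I Dt undefined qt
          (\<lambda>tt. Dk k (w(xs ! k := s)) * Pa k (Rset I (w(xs ! k := s))) * Kk k (w(xs ! k := s)) tt))"
proof -
  let ?i = "xs ! k" let ?J = "I - {?i}"
  let ?EJ = "EP ?J (\<lambda>_. {0..B}) 0 hv"
  let ?G = "\<lambda>w. Dk k (w(?i := s))" and ?A = "\<lambda>w. Pa k (Rset I (w(?i := s)))"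
  let ?K = "\<lambda>tt w. Kk k (w(?i := s)) tt"
  have iI: "?i \<in> I" by (rule xs_nth_I[OF k])
  have finJ: "finite ?J" using finI by simp
  have fD: "\<forall>j\<in>?J. finite ((\<lambda>_. {0..B::nat}) j)" by simp
  have sJ: "\<forall>j\<in>?J. sum (hv j) ((\<lambda>_. {0..B}) j) = 1" using hv_sum by simp
  have nJ: "\<forall>j\<in>?J. \<forall>s\<in>(\<lambda>_. {0..B}) j. 0 \<le> hv j s" using hv_nonneg by simp
  have Gnn: "?G w \<ge> 0" if "w \<in> PD ?J (\<lambda>_. {0..B}) 0" for w
    unfolding Dk_def by (rule Dl_nonneg[OF xs_props(1) PD_upd_vecs[OF that iI s(2)] f_mono k])
  have Ann: "?A w \<ge> 0" for w unfolding Pa_def by simp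
  have Knn: "?K tt w \<ge> 0" for tt w unfolding Kk_def by simp
  have aG: "antitone_on_PD ?J (\<lambda>_. {0..B}) 0 ?G" by (rule anti_G[OF k s(2)])
  have aA: "antitone_on_PD ?J (\<lambda>_. {0..B}) 0 ?A" by (rule anti_A[OF k s(1)])
  have aK: "antitone_on_PD ?J (\<lambda>_. {0..B}) 0 (?K tt)" for tt by (rule anti_K[OF k])
  have aGA: "antitone_on_PD ?J (\<lambda>_. {0..B}) 0 (\<lambda>w. ?G w * ?A w)"
    by (rule anti_mult[OF aG aA Gnn Ann])
  have EG: "?EJ ?G \<ge> 0" by (rule EP_nonneg[OF nJ Gnn])
  have EA': "?EJ ?A \<ge> \<gamma>" by (rule EA[OF k s(1) ybi])
  have EKnn: "?EJ (?K tt) \<ge> 0" for tt by (rule EP_nonneg[OF nJ Knn])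
  have per: "\<gamma> * ?EJ ?G * ?EJ (?K tt) \<le> ?EJ (\<lambda>w. ?G w * ?A w * ?K tt w)" for tt
  proof -
    have "\<gamma> * ?EJ ?G * ?EJ (?K tt) \<le> ?EJ ?A * ?EJ ?G * ?EJ (?K tt)"
      using EA' EG EKnn by (intro mult_right_mono) auto
    also have "\<dots> = ?EJ ?G * ?EJ ?A * ?EJ (?K tt)" by simp
    also have "\<dots> \<le> ?EJ (\<lambda>w. ?G w * ?A w) * ?EJ (?K tt)"
      using harris[OF finJ fD sJ nJ aG aA] EKnn by (intro mult_right_mono) auto
    also have "\<dots> \<le> ?EJ (\<lambda>w. ?G w * ?A w * ?K tt w)"
      by (rule harris[OF finJ fD sJ nJ aGA aK])
    finally show ?thesis .
  qed
  have "\<gamma> * (1 - 2 * l) * ?EJ ?G = \<gamma> * ?EJ ?G * (1 - 2 * l)" by simp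
  also have "\<dots> \<le> \<gamma> * ?EJ ?G * EP I Dt undefined qt (\<lambda>tt. ?EJ (?K tt))"
    using EK[OF k s(1) ybi] EG \<gamma>_range by (intro mult_left_mono) auto
  also have "\<dots> = EP I Dt undefined qt (\<lambda>tt. \<gamma> * ?EJ ?G * ?EJ (?K tt))"
    unfolding EP_cmult ..
  also have "\<dots> \<le> EP I Dt undefined qt (\<lambda>tt. ?EJ (\<lambda>w. ?G w * ?A w * ?K tt w))"
    by (rule EP_mono[OF qt_nn per])
  also have "\<dots> = ?EJ (\<lambda>w. EP I Dt undefined qt (\<lambda>tt. ?G w * ?A w * ?K tt w))"
    by (rule EP_swap[symmetric])
  finally show ?thesis .
qed

lemma M4:
  assumes k: "k < length xs"
  shows "EP I (\<lambda>_. {0..B}) 0 hv (\<lambda>v. EP I Dt undefined qt (\<lambda>tt. Dk k v * Pa k (Rset I v) * Kk k v tt))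
   \<ge> \<gamma> * (1 - 2 * l) * EP I (\<lambda>_. {0..B}) 0 hv (Dk k)"
proof -
  let ?i = "xs ! k" let ?J = "I - {?i}"
  let ?EJ = "EP ?J (\<lambda>_. {0..B}) 0 hv"
  have iI: "?i \<in> I" by (rule xs_nth_I[OF k])
  have fD: "\<forall>j\<in>I. finite ((\<lambda>_. {0..B::nat}) j)" by simp
  have "\<gamma> * (1 - 2 * l) * EP I (\<lambda>_. {0..B}) 0 hv (Dk k)
      = (\<Sum>s\<in>{0..B}. hv ?i s * (\<gamma> * (1 - 2 * l) * ?EJ (\<lambda>w. Dk k (w(?i := s)))))"
    unfolding EP_insert'[OF finI iI fD] sum_distrib_left by (simp add: mult_ac)
  also have "\<dots> \<le> (\<Sum>s\<in>{0..B}. hv ?i s * ?EJ (\<lambda>w. EP I Dt undefined qt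
          (\<lambda>tt. Dk k (w(?i := s)) * Pa k (Rset I (w(?i := s))) * Kk k (w(?i := s)) tt)))"
  proof (rule sum_mono)
    fix s assume s: "s \<in> {0..B}"
    show "hv ?i s * (\<gamma> * (1 - 2 * l) * ?EJ (\<lambda>w. Dk k (w(?i := s))))
        \<le> hv ?i s * ?EJ (\<lambda>w. EP I Dt undefined qt (\<lambda>tt. Dk k (w(?i := s)) * Pa k (Rset I (w(?i := s))) * Kk k (w(?i := s)) tt))"
    proof (cases "s = 0")
      case True
      have z: "Dk k (w(?i := s)) = 0" for w using True by (intro Dk_zero[OF k]) simp
      show ?thesis unfolding z by (simp add: EP_def)
    next
      case False
      show ?thesis
      proof (cases "yb ?i > 0")
        case True
        show ?thesis using M4core[OF k False _ True] s hv_nonneg[OF iI s] by (intro mult_left_mono) auto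
      next
        case nb: False
        then have "yb ?i = 0" using yb_nonneg[of ?i] by simp
        then have "hv ?i s = 0" using False unfolding hv_def hq_def by simp
        then show ?thesis by simp
      qed
    qed
  qed
  also have "\<dots> = EP I (\<lambda>_. {0..B}) 0 hv (\<lambda>v. EP I Dt undefined qt (\<lambda>tt. Dk k v * Pa k (Rset I v) * Kk k v tt))"
    unfolding EP_insert'[OF finI iI fD] ..
  finally show ?thesis .
qed

lemma main: "expected_psi_c I B p c C chi f y \<ge> (1 - min (2 * \<beta>) (1/2)) * \<gamma> * multilinear_ext I (fbar I B p f) (xbar B C c y)"
proof -
  let ?a = "\<gamma> * (1 - 2 * l)"
  have a: "0 \<le> ?a" "?a \<le> 1" using l_range \<gamma>_range by (auto intro: mult_le_one)
  have f0: "f0 \<ge> 0" unfolding f0_def using f_nonneg by (auto simp: vecs_def)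
  have "(1 - min (2 * \<beta>) (1/2)) * \<gamma> * multilinear_ext I (fbar I B p f) (xbar B C c y)
      = ?a * f0 + (\<Sum>k<length xs. ?a * EP I (\<lambda>_. {0..B}) 0 hv (Dk k))"
    unfolding yb_def[symmetric] M5 l_range(3)[symmetric] by (simp add: algebra_simps sum_distrib_left)
  also have "\<dots> \<le> f0 + (\<Sum>k<length xs. EP I (\<lambda>_. {0..B}) 0 hv (\<lambda>v. EP I Dt undefined qt (\<lambda>tt. Dk k v * Pa k (Rset I v) * Kk k v tt)))"
  proof (rule add_mono)
    show "?a * f0 \<le> f0" using a f0 by (simp add: mult_left_le_one_le)
    show "(\<Sum>k<length xs. ?a * EP I (\<lambda>_. {0..B}) 0 hv (Dk k)) \<le> (\<Sum>k<length xs. EP I (\<lambda>_. {0..B}) 0 hv (\<lambda>v. EP I Dt undefined qt (\<lambda>tt. Dk k v * Pa k (Rset I v) * Kk k v tt)))"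
      using M4 by (intro sum_mono) auto
  qed
  also have "\<dots> \<le> expected_psi_c I B p c C chi f y" by (rule M3)
  finally show ?thesis .
qed

end

theorem lemma6:
  fixes I :: "'i set" and B C :: nat
    and f :: "('i \<Rightarrow> nat) \<Rightarrow> real"
    and p :: "'i \<Rightarrow> nat \<Rightarrow> real"
    and c :: "'i \<Rightarrow> nat \<Rightarrow> nat"
    and Iout :: "'i set set"
    and \<beta> \<gamma> :: real
    and chi :: "('i \<Rightarrow> real) \<Rightarrow> 'i set \<Rightarrow> 'i set pmf"
    and y :: "'i \<Rightarrow> nat \<Rightarrow> real"
  assumes finI: "finite I"
    and B_pos: "B > 0" and C_pos: "C > 0"
    and f_nonneg: "\<forall>u\<in>vecs I B. f u \<ge> 0"
    and f_mono: "monotone_vec I B f"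
    and f_sub: "lattice_submodular I B f"
    and p_nonneg: "\<forall>i\<in>I. \<forall>s\<in>{1..B}. p i s \<ge> 0"
    and p_sum: "\<forall>i\<in>I. (\<Sum>s\<in>{1..B}. p i s) = 1"
    and c_mono: "\<forall>i\<in>I. \<forall>s\<in>{1..B}. \<forall>s'\<in>{1..B}. s' \<le> s \<longrightarrow> c i s' \<le> c i s"
    and Iout_dc: "downward_closed I Iout"
    and \<beta>_range: "0 \<le> \<beta>" "\<beta> \<le> 1"
    and \<gamma>_range: "0 \<le> \<gamma>" "\<gamma> \<le> 1"
    and crs: "monotone_balanced_CRS I Iout \<beta> \<gamma> chi"
    and y_def: "\<exists>x. P1_feasible I B p c C Iout x \<and> y = (\<lambda>i t. min \<beta> (1/4) * x i t)"
  shows "expected_psi_c I B p c C chi f y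
           \<ge> (1 - min (2 * \<beta>) (1/2)) * \<gamma> * multilinear_ext I (fbar I B p f) (xbar B C c y)"
proof -
  obtain x where x: "P1_feasible I B p c C Iout x" "y = (\<lambda>i t. min \<beta> (1/4) * x i t)"
    using y_def by blast
  interpret L: L6 I B C f p c Iout \<beta> \<gamma> chi y x
    by (unfold_locales; (rule assms x)?)
  show ?thesis by (rule L.main)
qed

end
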